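(* Let $R(z)=\lambda\prod_{k=1}^n\frac{z-z_k}{1-\overline{z_k}z}$ be a finite Blaschke product ($n\ge1$, $\lambda\in\mathbb{T}$, $z_1,\dots,z_n\in\mathbb{D}$), and define on $\mathbb{T}$ $u_1(z)=\frac{\sqrt{1-|z_1|^2}}{1-\overline{z_1}z}$ and $u_i(z)=\frac{\sqrt{1-|z_i|^2}}{1-\overline{z_i}z}\prod_{k=1}^{i-1}\frac{z-z_k}{1-\overline{z_k}z}$ for $i=2,\dots,n$. Then for all $i,j\in\{1,\dots,n\}$, $(T_{u_i}C_R)^*T_{u_j}C_R=\delta_{ij}I$ and $\sum_{i=1}^n T_{u_i}C_R(T_{u_i}C_R)^*=I$ as operators on $H^2$.
   Context: $H^2\subset L^2(\mathbb{T})$ is the Hardy space on the unit circle (identified with that of the unit disk $\mathbb{D}$). For $a\in L^\infty(\mathbb{T})$, $T_a f=P_{H^2}(af)$ is the Toeplitz operator; $C_R f=f\circ R$ is the composition operator on $H^2$. *)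

theory Defs
  imports "HOL-Analysis.Analysis"
begin

text \<open>Elements of the Hardy space H^2 are represented as holomorphic functions on the
open unit disk (values outside the disk are irrelevant).  The n-th Taylor coefficient at 0:\<close>
definition taylor_coeff :: "(complex \<Rightarrow> complex) \<Rightarrow> nat \<Rightarrow> complex" where
  "taylor_coeff f n = (deriv ^^ n) f 0 / of_nat (fact n)"

definition H2 :: "(complex \<Rightarrow> complex) set" where
  "H2 = {f. f holomorphic_on ball 0 1 \<and> summable (\<lambda>n. (cmod (taylor_coeff f n))\<^sup>2)}"

text \<open>Inner product of H^2 (equal to the L^2(T) inner product of boundary values).\<close>
definition h2_inner :: "(complex \<Rightarrow> complex) \<Rightarrow> (complex \<Rightarrow> complex) \<Rightarrow> complex" where
  "h2_inner f g = (\<Sum>n. taylor_coeff f n * cnj (taylor_coeff g n))"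

definition fourier_coeff :: "(complex \<Rightarrow> complex) \<Rightarrow> int \<Rightarrow> complex" where
  "fourier_coeff a k = integral {0..2*pi} (\<lambda>t. a (cis t) * cis (- of_int k * t)) / (2 * pi)"

text \<open>Toeplitz operator T_a f = P_{H^2}(a f): the m-th Fourier coefficient of a f is
  sum over n of a^(m-n) f_n; the projection keeps m >= 0.\<close>
definition toeplitz :: "(complex \<Rightarrow> complex) \<Rightarrow> (complex \<Rightarrow> complex) \<Rightarrow> (complex \<Rightarrow> complex)" where
  "toeplitz a f = (\<lambda>z. \<Sum>m. (\<Sum>n. fourier_coeff a (int m - int n) * taylor_coeff f n) * z ^ m)"

definition comp_op :: "(complex \<Rightarrow> complex) \<Rightarrow> (complex \<Rightarrow> complex) \<Rightarrow> (complex \<Rightarrow> complex)" where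
  "comp_op R f = (\<lambda>z. f (R z))"

text \<open>Hilbert-space adjoint on H^2 (normalised to vanish off the open disk, so it is unique).\<close>
definition h2_adjoint ::
  "((complex \<Rightarrow> complex) \<Rightarrow> (complex \<Rightarrow> complex)) \<Rightarrow> (complex \<Rightarrow> complex) \<Rightarrow> (complex \<Rightarrow> complex)" where
  "h2_adjoint A g = (THE h. h \<in> H2 \<and> (\<forall>z. z \<notin> ball 0 1 \<longrightarrow> h z = 0) \<and>
                          (\<forall>f\<in>H2. h2_inner (A f) g = h2_inner f h))"

definition blaschke :: "complex \<Rightarrow> (nat \<Rightarrow> complex) \<Rightarrow> nat \<Rightarrow> complex \<Rightarrow> complex" where
  "blaschke lam zs n z = lam * (\<Prod>k=1..n. (z - zs k) / (1 - cnj (zs k) * z))"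

definition ufun :: "(nat \<Rightarrow> complex) \<Rightarrow> nat \<Rightarrow> complex \<Rightarrow> complex" where
  "ufun zs i z = complex_of_real (sqrt (1 - (cmod (zs i))\<^sup>2)) / (1 - cnj (zs i) * z)
               * (\<Prod>k\<in>{1..<i}. (z - zs k) / (1 - cnj (zs k) * z))"

end

theory Submission
  imports Defs "HOL-Complex_Analysis.Complex_Analysis"
begin

definition l2 :: "(nat \<Rightarrow> complex) \<Rightarrow> bool" where
  "l2 a \<longleftrightarrow> summable (\<lambda>n. (norm (a n))\<^sup>2)"
definition nn :: "(nat \<Rightarrow> complex) \<Rightarrow> real" where
  "nn a = (\<Sum>n. (norm (a n))\<^sup>2)"
definition ip :: "(nat \<Rightarrow> complex) \<Rightarrow> (nat \<Rightarrow> complex) \<Rightarrow> complex" where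
  "ip a b = (\<Sum>n. a n * cnj (b n))"

lemma nn_nonneg: "l2 a \<Longrightarrow> nn a \<ge> 0"
  unfolding nn_def l2_def by (intro suminf_nonneg) auto

lemma l2_absprod: assumes "l2 a" "l2 b" shows "summable (\<lambda>n. norm (a n) * norm (b n))"
proof (rule summable_comparison_test')
  show "summable (\<lambda>n. (norm (a n))\<^sup>2 + (norm (b n))\<^sup>2)"
    using assms unfolding l2_def by (intro summable_add)
  fix n
  have "2 * norm (a n) * norm (b n) \<le> (norm (a n))\<^sup>2 + (norm (b n))\<^sup>2"
    by (rule sum_squares_bound)
  moreover have "0 \<le> norm (a n) * norm (b n)" by simp
  ultimately show "norm (norm (a n) * norm (b n)) \<le> (norm (a n))\<^sup>2 + (norm (b n))\<^sup>2"
    by (simp only: real_norm_def abs_mult abs_norm_cancel)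
qed

lemma ip_summable: assumes "l2 a" "l2 b" shows "summable (\<lambda>n. a n * cnj (b n))"
  by (rule summable_norm_cancel) (use l2_absprod[OF assms] in \<open>simp add: norm_mult\<close>)

lemma l2_add: "l2 a \<Longrightarrow> l2 b \<Longrightarrow> l2 (\<lambda>n. a n + b n)"
  unfolding l2_def
proof (rule summable_comparison_test')
  assume A: "summable (\<lambda>n. (norm (a n))\<^sup>2)" "summable (\<lambda>n. (norm (b n))\<^sup>2)"
  show "summable (\<lambda>n. 2 * (norm (a n))\<^sup>2 + 2 * (norm (b n))\<^sup>2)"
    using A by (intro summable_add summable_mult)
  fix n
  have "norm (a n + b n) \<le> norm (a n) + norm (b n)" by (rule norm_triangle_ineq)
  hence "(norm (a n + b n))\<^sup>2 \<le> (norm (a n) + norm (b n))\<^sup>2"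
    by (intro power_mono) auto
  also have "\<dots> \<le> 2 * (norm (a n))\<^sup>2 + 2 * (norm (b n))\<^sup>2"
    using sum_squares_bound[of "norm (a n)" "norm (b n)"] by (simp add: power2_eq_square algebra_simps)
  finally show "norm ((norm (a n + b n))\<^sup>2) \<le> 2 * (norm (a n))\<^sup>2 + 2 * (norm (b n))\<^sup>2" by simp
qed

lemma l2_scale: "l2 a \<Longrightarrow> l2 (\<lambda>n. c * a n)"
  unfolding l2_def by (simp add: norm_mult power_mult_distrib summable_mult)

lemma l2_uminus: "l2 a \<Longrightarrow> l2 (\<lambda>n. - a n)"
  unfolding l2_def by simp

lemma l2_diff: "l2 a \<Longrightarrow> l2 b \<Longrightarrow> l2 (\<lambda>n. a n - b n)"
  using l2_add[of a "\<lambda>n. - b n"] l2_uminus[of b] by simp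

lemma l2_sum: "finite J \<Longrightarrow> (\<And>j. j \<in> J \<Longrightarrow> l2 (v j)) \<Longrightarrow> l2 (\<lambda>n. \<Sum>j\<in>J. v j n)"
proof (induction J rule: finite_induct)
  case empty then show ?case by (simp add: l2_def)
next
  case (insert x F) then show ?case by (simp add: l2_add)
qed

lemma l2_zero: "l2 (\<lambda>n. 0)" by (simp add: l2_def)

lemma ip_add1: assumes "l2 a" "l2 b" "l2 c" shows "ip (\<lambda>n. a n + b n) c = ip a c + ip b c"
  unfolding ip_def using ip_summable[OF assms(1,3)] ip_summable[OF assms(2,3)]
  by (simp add: distrib_right suminf_add)

lemma ip_scale1: assumes "l2 a" "l2 c" shows "ip (\<lambda>n. x * a n) c = x * ip a c"
  unfolding ip_def using ip_summable[OF assms] by (simp add: suminf_mult mult.assoc)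

lemma ip_cnj: assumes "l2 a" "l2 b" shows "ip a b = cnj (ip b a)"
proof -
  have "(\<lambda>n. b n * cnj (a n)) sums ip b a" unfolding ip_def
    using ip_summable[OF assms(2,1)] by (simp add: summable_sums)
  hence "(\<lambda>n. cnj (b n * cnj (a n))) sums cnj (ip b a)" by (simp only: sums_cnj)
  hence "(\<lambda>n. a n * cnj (b n)) sums cnj (ip b a)" by (simp add: mult.commute)
  thus ?thesis unfolding ip_def by (rule sums_unique[symmetric])
qed

lemma ip_add2: assumes "l2 a" "l2 b" "l2 c" shows "ip c (\<lambda>n. a n + b n) = ip c a + ip c b"
proof -
  have "ip c (\<lambda>n. a n + b n) = cnj (ip (\<lambda>n. a n + b n) c)"
    using assms by (intro ip_cnj l2_add)
  also have "\<dots> = cnj (ip a c) + cnj (ip b c)" using ip_add1[OF assms] by simp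
  also have "\<dots> = ip c a + ip c b" using ip_cnj[OF assms(3,1)] ip_cnj[OF assms(3,2)] by simp
  finally show ?thesis .
qed

lemma ip_scale2: assumes "l2 a" "l2 c" shows "ip c (\<lambda>n. x * a n) = cnj x * ip c a"
proof -
  have "ip c (\<lambda>n. x * a n) = cnj (ip (\<lambda>n. x * a n) c)"
    using assms by (intro ip_cnj l2_scale)
  also have "\<dots> = cnj x * cnj (ip a c)" using ip_scale1[OF assms] by simp
  also have "\<dots> = cnj x * ip c a" using ip_cnj[OF assms(2,1)] by simp
  finally show ?thesis .
qed

lemma ip_uminus1: assumes "l2 a" "l2 c" shows "ip (\<lambda>n. - a n) c = - ip a c"
  using ip_scale1[OF assms, of "-1"] by simp

lemma ip_diff1: assumes "l2 a" "l2 b" "l2 c" shows "ip (\<lambda>n. a n - b n) c = ip a c - ip b c"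
  using ip_add1[OF assms(1) l2_uminus[OF assms(2)] assms(3)] ip_uminus1[OF assms(2,3)] by simp

lemma ip_diff2: assumes "l2 a" "l2 b" "l2 c" shows "ip c (\<lambda>n. a n - b n) = ip c a - ip c b"
proof -
  have "ip c (\<lambda>n. a n - b n) = cnj (ip (\<lambda>n. a n - b n) c)"
    using assms by (intro ip_cnj l2_diff)
  also have "\<dots> = cnj (ip a c) - cnj (ip b c)" using ip_diff1[OF assms] by simp
  also have "\<dots> = ip c a - ip c b" using ip_cnj[OF assms(3,1)] ip_cnj[OF assms(3,2)] by simp
  finally show ?thesis .
qed

lemma ip_sum1: "finite J \<Longrightarrow> (\<And>j. j \<in> J \<Longrightarrow> l2 (v j)) \<Longrightarrow> l2 c \<Longrightarrow>
   ip (\<lambda>n. \<Sum>j\<in>J. x j * v j n) c = (\<Sum>j\<in>J. x j * ip (v j) c)"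
proof (induction J rule: finite_induct)
  case empty then show ?case by (simp add: ip_def)
next
  case (insert y F)
  have l: "l2 (\<lambda>n. \<Sum>j\<in>F. x j * v j n)" using insert by (intro l2_sum l2_scale) auto
  have "ip (\<lambda>n. \<Sum>j\<in>insert y F. x j * v j n) c = ip (\<lambda>n. x y * v y n + (\<Sum>j\<in>F. x j * v j n)) c"
    using insert by simp
  also have "\<dots> = ip (\<lambda>n. x y * v y n) c + ip (\<lambda>n. \<Sum>j\<in>F. x j * v j n) c"
    using insert l by (intro ip_add1 l2_scale) auto
  also have "\<dots> = x y * ip (v y) c + (\<Sum>j\<in>F. x j * ip (v j) c)"
    using insert by (simp add: ip_scale1)
  finally show ?case using insert by simp
qed

lemma ip_sum2: "finite J \<Longrightarrow> (\<And>j. j \<in> J \<Longrightarrow> l2 (v j)) \<Longrightarrow> l2 c \<Longrightarrow>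
   ip c (\<lambda>n. \<Sum>j\<in>J. x j * v j n) = (\<Sum>j\<in>J. cnj (x j) * ip c (v j))"
proof -
  assume a: "finite J" "\<And>j. j \<in> J \<Longrightarrow> l2 (v j)" "l2 c"
  have "ip c (\<lambda>n. \<Sum>j\<in>J. x j * v j n) = cnj (ip (\<lambda>n. \<Sum>j\<in>J. x j * v j n) c)"
    using a by (intro ip_cnj l2_sum l2_scale) auto
  also have "\<dots> = cnj (\<Sum>j\<in>J. x j * ip (v j) c)" using a by (simp add: ip_sum1)
  also have "\<dots> = (\<Sum>j\<in>J. cnj (x j) * ip c (v j))"
    using a ip_cnj[OF a(3) a(2)] by simp
  finally show ?thesis .
qed

lemma ip_self: assumes "l2 a" shows "ip a a = complex_of_real (nn a)"
proof -
  have "(\<lambda>n. a n * cnj (a n)) = (\<lambda>n. of_real ((norm (a n))\<^sup>2))"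
    by (rule ext) (simp only: complex_norm_square)
  moreover have "(\<lambda>n. (norm (a n))\<^sup>2) sums nn a" using assms unfolding l2_def nn_def
    by (simp add: summable_sums)
  hence "(\<lambda>n. complex_of_real ((norm (a n))\<^sup>2)) sums complex_of_real (nn a)"
    by (rule sums_of_real)
  ultimately show ?thesis unfolding ip_def by (simp add: sums_iff)
qed

lemma CS_real: assumes "l2 a" "l2 b"
  shows "(\<Sum>n. norm (a n) * norm (b n))\<^sup>2 \<le> nn a * nn b"
proof -
  have s: "summable (\<lambda>n. norm (a n) * norm (b n))" by (rule l2_absprod[OF assms])
  have "(\<lambda>N. (\<Sum>n<N. norm (a n) * norm (b n))\<^sup>2) \<longlonglongrightarrow> (\<Sum>n. norm (a n) * norm (b n))\<^sup>2"
    by (intro tendsto_intros summable_LIMSEQ s)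
  moreover have "(\<Sum>n<N. norm (a n) * norm (b n))\<^sup>2 \<le> nn a * nn b" for N
  proof -
    have "(\<Sum>n<N. norm (a n) * norm (b n))\<^sup>2 \<le> (\<Sum>n<N. (norm (a n))\<^sup>2) * (\<Sum>n<N. (norm (b n))\<^sup>2)"
      by (rule Cauchy_Schwarz_ineq_sum)
    also have "\<dots> \<le> nn a * nn b"
      using assms unfolding l2_def nn_def
      by (intro mult_mono sum_le_suminf) (auto intro: sum_nonneg suminf_nonneg)
    finally show ?thesis .
  qed
  ultimately show ?thesis by (intro LIMSEQ_le_const2) auto
qed

lemma CS: assumes "l2 a" "l2 b" shows "(norm (ip a b))\<^sup>2 \<le> nn a * nn b"
proof -
  have "norm (ip a b) \<le> (\<Sum>n. norm (a n * cnj (b n)))"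
    unfolding ip_def using l2_absprod[OF assms]
    by (intro summable_norm) (simp add: norm_mult)
  also have "\<dots> = (\<Sum>n. norm (a n) * norm (b n))" by (simp add: norm_mult)
  finally have "(norm (ip a b))\<^sup>2 \<le> (\<Sum>n. norm (a n) * norm (b n))\<^sup>2"
    by (intro power_mono) auto
  also have "\<dots> \<le> nn a * nn b" by (rule CS_real[OF assms])
  finally show ?thesis .
qed

lemma nn_le_2: assumes "l2 a" "l2 b" shows "nn (\<lambda>n. a n + b n) \<le> 2 * nn a + 2 * nn b"
proof -
  have "nn (\<lambda>n. a n + b n) \<le> (\<Sum>n. 2 * (norm (a n))\<^sup>2 + 2 * (norm (b n))\<^sup>2)"
    unfolding nn_def
  proof (rule suminf_le)
    fix n
    have "norm (a n + b n) \<le> norm (a n) + norm (b n)" by (rule norm_triangle_ineq)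
    hence "(norm (a n + b n))\<^sup>2 \<le> (norm (a n) + norm (b n))\<^sup>2"
      by (intro power_mono) auto
    also have "\<dots> \<le> 2 * (norm (a n))\<^sup>2 + 2 * (norm (b n))\<^sup>2"
      using sum_squares_bound[of "norm (a n)" "norm (b n)"] by (simp add: power2_eq_square algebra_simps)
    finally show "(norm (a n + b n))\<^sup>2 \<le> 2 * (norm (a n))\<^sup>2 + 2 * (norm (b n))\<^sup>2" .
  next
    show "summable (\<lambda>n. (norm (a n + b n))\<^sup>2)" using l2_add[OF assms] by (simp add: l2_def)
    show "summable (\<lambda>n. 2 * (norm (a n))\<^sup>2 + 2 * (norm (b n))\<^sup>2)"
      using assms unfolding l2_def by (intro summable_add summable_mult)
  qed
  also have "\<dots> = 2 * nn a + 2 * nn b"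
    using assms unfolding l2_def nn_def
    by (simp add: suminf_add[symmetric] suminf_mult summable_mult)
  finally show ?thesis .
qed

lemma tendsto_0_sq: fixes f :: "nat \<Rightarrow> complex"
  assumes A: "\<And>N. (norm (f N))\<^sup>2 \<le> g N" and B: "g \<longlonglongrightarrow> 0" shows "f \<longlonglongrightarrow> 0"
proof -
  have g0: "(\<lambda>N. sqrt (g N)) \<longlonglongrightarrow> 0" using tendsto_real_sqrt[OF B] by simp
  have le: "norm (f N) \<le> sqrt (g N)" for N by (rule real_le_rsqrt[OF A])
  show ?thesis by (rule Lim_null_comparison[OF always_eventually g0]) (rule allI, rule le)
qed

lemma ip_tendsto:
  assumes la: "l2 a" and lb: "l2 b" and lA: "\<And>N. l2 (A N)" and lB: "\<And>N. l2 (B N)"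
    and cA: "(\<lambda>N. nn (\<lambda>k. A N k - a k)) \<longlonglongrightarrow> 0" and cB: "(\<lambda>N. nn (\<lambda>k. B N k - b k)) \<longlonglongrightarrow> 0"
  shows "(\<lambda>N. ip (A N) (B N)) \<longlonglongrightarrow> ip a b"
proof -
  have dA: "\<And>N. l2 (\<lambda>k. A N k - a k)" and dB: "\<And>N. l2 (\<lambda>k. B N k - b k)"
    using la lb lA lB by (auto intro: l2_diff)
  have eq: "ip (A N) (B N) - ip a b = ip (\<lambda>k. A N k - a k) (B N) + ip a (\<lambda>k. B N k - b k)" for N
    using la lb lA lB by (simp add: ip_diff1 ip_diff2)
  have t1: "(\<lambda>N. ip (\<lambda>k. A N k - a k) (B N)) \<longlonglongrightarrow> 0"
  proof (rule tendsto_0_sq)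
    fix N
    have "nn (\<lambda>k. (B N k - b k) + b k) \<le> 2 * nn (\<lambda>k. B N k - b k) + 2 * nn b"
      by (rule nn_le_2[OF dB lb])
    hence BN: "nn (B N) \<le> 2 * nn (\<lambda>k. B N k - b k) + 2 * nn b" by simp
    have C: "(norm (ip (\<lambda>k. A N k - a k) (B N)))\<^sup>2 \<le> nn (\<lambda>k. A N k - a k) * nn (B N)"
      by (rule CS[OF dA lB])
    have "nn (\<lambda>k. A N k - a k) * nn (B N) \<le> nn (\<lambda>k. A N k - a k) * (2 * nn (\<lambda>k. B N k - b k) + 2 * nn b)"
      by (rule mult_left_mono[OF BN nn_nonneg[OF dA]])
    with C show "(norm (ip (\<lambda>k. A N k - a k) (B N)))\<^sup>2 \<le>
        nn (\<lambda>k. A N k - a k) * (2 * nn (\<lambda>k. B N k - b k) + 2 * nn b)"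
      by (rule order_trans)
  next
    show "(\<lambda>N. nn (\<lambda>k. A N k - a k) * (2 * nn (\<lambda>k. B N k - b k) + 2 * nn b)) \<longlonglongrightarrow> 0"
      using tendsto_mult[OF cA tendsto_add[OF tendsto_mult[OF tendsto_const cB] tendsto_const]]
      by simp
  qed
  have t2: "(\<lambda>N. ip a (\<lambda>k. B N k - b k)) \<longlonglongrightarrow> 0"
  proof (rule tendsto_0_sq)
    fix N show "(norm (ip a (\<lambda>k. B N k - b k)))\<^sup>2 \<le> nn a * nn (\<lambda>k. B N k - b k)"
      by (rule CS[OF la dB])
  next
    show "(\<lambda>N. nn a * nn (\<lambda>k. B N k - b k)) \<longlonglongrightarrow> 0"
      using tendsto_mult[OF tendsto_const cB] by simp
  qed
  have "(\<lambda>N. ip (A N) (B N) - ip a b) \<longlonglongrightarrow> 0"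
    unfolding eq using tendsto_add[OF t1 t2] by simp
  thus ?thesis by (rule LIM_zero_cancel)
qed

lemma fourier_holo:
  fixes F :: "complex \<Rightarrow> complex" and k :: int
  assumes holF: "F holomorphic_on ball 0 \<rho>" and r1: "1 < \<rho>"
  shows "((\<lambda>t. F (cis t) * cis (- of_int k * t)) has_integral
           (if k \<ge> 0 then 2 * pi * taylor_coeff F (nat k) else 0)) {0..2*pi}"
proof -
  define m where "m = nat (-k)"
  define j where "j = nat k"
  define G where "G = (\<lambda>u. F u * u ^ m)"
  have holG: "G holomorphic_on ball 0 \<rho>" unfolding G_def using holF by (intro holomorphic_intros)
  have "cball 0 1 \<subseteq> ball (0::complex) \<rho>" using r1 by auto
  hence cG: "continuous_on (cball 0 1) G"
    using holG holomorphic_on_imp_continuous_on continuous_on_subset by blast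
  have hG1: "G holomorphic_on ball 0 1" using holG r1 holomorphic_on_subset by fastforce
  have C: "((\<lambda>u. G u / (u - 0) ^ (Suc j)) has_contour_integral ((2 * pi * \<i>) / (fact j) * (deriv ^^ j) G 0))
           (circlepath 0 1)"
    by (rule Cauchy_has_contour_integral_higher_derivative_circlepath[OF cG hG1]) simp
  hence "((\<lambda>t. G (0 + 1 * cis t) / (0 + 1 * cis t - 0) ^ Suc j * 1 * \<i> * cis t) has_integral
        ((2 * pi * \<i>) / (fact j) * (deriv ^^ j) G 0)) {0..2*pi}"
    unfolding circlepath_def by (subst (asm) has_contour_integral_part_circlepath_iff) auto
  moreover have "\<And>t. G (0 + 1 * cis t) / (0 + 1 * cis t - 0) ^ Suc j * 1 * \<i> * cis t
       = \<i> * (F (cis t) * cis (- of_int k * t))"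
  proof -
    fix t
    have "cis t ^ m / cis t ^ Suc j * cis t = cis t ^ m / cis t ^ j"
      by (simp add: field_simps)
    also have "\<dots> = cis (of_nat m * t - of_nat j * t)"
      by (metis Complex.DeMoivre cis_divide)
    also have "of_nat m * t - of_nat j * t = - of_int k * t"
      unfolding m_def j_def by (cases "k \<ge> 0") (auto simp: algebra_simps)
    finally show "G (0 + 1 * cis t) / (0 + 1 * cis t - 0) ^ Suc j * 1 * \<i> * cis t
       = \<i> * (F (cis t) * cis (- of_int k * t))"
      unfolding G_def by (simp add: field_simps)
  qed
  ultimately have "((\<lambda>t. \<i> * (F (cis t) * cis (- of_int k * t))) has_integral
        ((2 * pi * \<i>) / (fact j) * (deriv ^^ j) G 0)) {0..2*pi}" by simp
  hence "((\<lambda>t. (-\<i>) * (\<i> * (F (cis t) * cis (- of_int k * t)))) has_integral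
        (-\<i>) * ((2 * pi * \<i>) / (fact j) * (deriv ^^ j) G 0)) {0..2*pi}"
    by (rule has_integral_mult_right)
  hence I: "((\<lambda>t. F (cis t) * cis (- of_int k * t)) has_integral
        (2 * pi / (fact j) * (deriv ^^ j) G 0)) {0..2*pi}" by (simp add: field_simps)
  show ?thesis
  proof (cases "k \<ge> 0")
    case True
    then have "m = 0" unfolding m_def by simp
    hence "G = F" unfolding G_def by auto
    then show ?thesis using I True unfolding taylor_coeff_def j_def by (simp add: field_simps)
  next
    case False
    then have "j = 0" "m > 0" unfolding m_def j_def by auto
    then show ?thesis using I False unfolding G_def by (simp add: zero_power)
  qed
qed

lemma tc_sums:
  assumes "F holomorphic_on ball 0 r" "z \<in> ball 0 r"
  shows "(\<lambda>n. taylor_coeff F n * z ^ n) sums F z"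
  using holomorphic_power_series[OF assms] by (simp add: taylor_coeff_def)

lemma tc_unique:
  assumes r: "r > 0" and S: "\<And>z. z \<in> ball 0 r \<Longrightarrow> (\<lambda>n. d n * z ^ n) sums F z"
  shows "taylor_coeff F n = d n"
proof -
  define D where "D = Abs_fps d"
  have "summable (\<lambda>n. d n * (of_real (r/2)) ^ n)"
    using S[of "of_real (r/2)"] r by (auto simp: sums_iff)
  hence "conv_radius d \<ge> ereal (norm (of_real (r/2) :: complex))"
    by (rule conv_radius_geI)
  hence c: "ereal (r/2) \<le> conv_radius d" using r by simp
  have "0 < ereal (r/2)" using r by simp
  hence "0 < conv_radius d" using c by (rule less_le_trans)
  hence "fps_conv_radius D > 0" unfolding D_def fps_conv_radius_def by simp
  moreover have "eventually (\<lambda>z. eval_fps D z = F z) (nhds 0)"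
  proof -
    have "eventually (\<lambda>z. z \<in> ball 0 r) (nhds (0::complex))"
      using r by (intro eventually_nhds_in_open) auto
    thus ?thesis
      by eventually_elim (use S in \<open>auto simp: eval_fps_def D_def sums_iff\<close>)
  qed
  ultimately have "F has_fps_expansion D" unfolding has_fps_expansion_def by auto
  from fps_nth_fps_expansion[OF this, of n] show ?thesis
    by (simp add: taylor_coeff_def D_def)
qed

lemma tc_cong:
  assumes "\<And>z. z \<in> ball 0 r \<Longrightarrow> F z = G z" "r > 0"
  shows "taylor_coeff F n = taylor_coeff G n"
proof -
  have "eventually (\<lambda>z. z \<in> ball 0 r) (nhds (0::complex))"
    using assms(2) by (intro eventually_nhds_in_open) auto
  hence "eventually (\<lambda>z. F z = G z) (nhds 0)" by eventually_elim (use assms in auto)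
  thus ?thesis unfolding taylor_coeff_def by (simp add: higher_deriv_cong_ev)
qed

lemma H2_iff: "F \<in> H2 \<longleftrightarrow> F holomorphic_on ball 0 1 \<and> l2 (taylor_coeff F)"
  unfolding H2_def l2_def by auto

lemma h2_inner_ip: "h2_inner F G = ip (taylor_coeff F) (taylor_coeff G)"
  unfolding h2_inner_def ip_def ..

lemma tc_abs_summable:
  assumes hol: "F holomorphic_on ball 0 \<rho>" and r1: "1 < \<rho>"
  shows "summable (\<lambda>n. norm (taylor_coeff F n))"
proof -
  define s where "s = (1 + \<rho>) / 2"
  have s: "1 < s" "s < \<rho>" using r1 unfolding s_def by auto
  have "(\<lambda>n. taylor_coeff F n * (of_real s) ^ n) sums F (of_real s)"
    using s by (intro tc_sums[OF hol]) auto
  hence sm: "summable (\<lambda>n. taylor_coeff F n * (of_real s) ^ n)" by (simp add: sums_iff)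
  have "summable (\<lambda>n. norm (taylor_coeff F n * (1::complex) ^ n))"
    by (rule powser_insidea[OF sm]) (use s in auto)
  thus ?thesis by simp
qed

lemma holo_H2:
  assumes hol: "F holomorphic_on ball 0 \<rho>" and r1: "1 < \<rho>"
  shows "F \<in> H2"
proof -
  have sm: "summable (\<lambda>n. norm (taylor_coeff F n))" by (rule tc_abs_summable[OF hol r1])
  hence "(\<lambda>n. norm (taylor_coeff F n)) \<longlonglongrightarrow> 0" by (rule summable_LIMSEQ_zero)
  hence ev: "eventually (\<lambda>n. norm (taylor_coeff F n) < 1) sequentially"
    by (rule order_tendstoD) simp
  have "summable (\<lambda>n. (norm (taylor_coeff F n))\<^sup>2)"
  proof (rule summable_comparison_test_ev[OF _ sm])
    show "eventually (\<lambda>n. norm ((norm (taylor_coeff F n))\<^sup>2) \<le> norm (taylor_coeff F n)) sequentially"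
      using ev
    proof eventually_elim
      case (elim n)
      have "norm (taylor_coeff F n) * norm (taylor_coeff F n) \<le> norm (taylor_coeff F n)"
        by (rule mult_left_le) (use elim in auto)
      thus ?case by (simp add: power2_eq_square)
    qed
  qed
  moreover have "F holomorphic_on ball 0 1"
    using hol r1 holomorphic_on_subset[of F "ball 0 \<rho>" "ball 0 1"] by auto
  ultimately show ?thesis unfolding H2_def by auto
qed

definition kf :: "complex \<Rightarrow> complex \<Rightarrow> complex" where
  "kf a z = 1 / (1 - cnj a * z)"

lemma tc_kf: assumes "norm a < 1" shows "taylor_coeff (kf a) n = cnj a ^ n"
proof (rule tc_unique[of 1])
  fix z :: complex assume "z \<in> ball 0 1"
  hence "norm a * norm z < 1 * 1" using assms
    by (intro mult_strict_mono') auto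
  hence "norm (cnj a * z) < 1" by (simp add: norm_mult)
  hence "(\<lambda>n. (cnj a * z) ^ n) sums (1 / (1 - cnj a * z))" by (rule geometric_sums)
  thus "(\<lambda>n. cnj a ^ n * z ^ n) sums kf a z" unfolding kf_def by (simp add: power_mult_distrib)
qed simp

lemma l2_kf: assumes "norm a < 1" shows "l2 (taylor_coeff (kf a))"
  and "nn (taylor_coeff (kf a)) = 1 / (1 - (norm a)\<^sup>2)"
proof -
  have g: "(\<lambda>n. ((norm a)\<^sup>2) ^ n) sums (1 / (1 - (norm a)\<^sup>2))"
    using assms by (intro geometric_sums) (simp add: abs_square_less_1)
  have e: "(\<lambda>n. (norm (taylor_coeff (kf a) n))\<^sup>2) = (\<lambda>n. ((norm a)\<^sup>2) ^ n)"
    by (rule ext) (simp add: tc_kf[OF assms] norm_power power2_eq_square power_mult_distrib)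
  show "l2 (taylor_coeff (kf a))" unfolding l2_def e using g by (simp add: sums_iff)
  show "nn (taylor_coeff (kf a)) = 1 / (1 - (norm a)\<^sup>2)" unfolding nn_def e using g by (simp add: sums_iff)
qed

lemma reproducing:
  assumes "F holomorphic_on ball 0 1" "norm a < 1"
  shows "ip (taylor_coeff F) (taylor_coeff (kf a)) = F a"
proof -
  have "(\<lambda>n. taylor_coeff F n * a ^ n) sums F a" using assms by (intro tc_sums) auto
  thus ?thesis unfolding ip_def tc_kf[OF assms(2)] by (simp add: sums_iff)
qed

lemma bounded_on_circle:
  assumes hol: "F holomorphic_on ball 0 \<rho>" and r1: "1 < \<rho>"
  obtains K where "K \<ge> 0" "\<And>t. norm (F (cis t)) \<le> K"
proof -
  have sub: "cball 0 1 \<subseteq> ball (0::complex) \<rho>" using r1 by auto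
  have "continuous_on (cball 0 1) F"
    by (rule continuous_on_subset[OF holomorphic_on_imp_continuous_on[OF hol] sub])
  hence "compact (F ` cball 0 1)" by (intro compact_continuous_image) auto
  hence "bounded (F ` cball 0 1)" by (rule compact_imp_bounded)
  then obtain K where K: "K > 0" "\<And>x. x \<in> F ` cball 0 1 \<Longrightarrow> norm x \<le> K"
    unfolding bounded_pos by auto
  have "norm (F (cis t)) \<le> K" for t using K(2)[of "F (cis t)"] by auto
  thus ?thesis using that[of K] K(1) by auto
qed

lemma parseval:
  assumes holF: "F holomorphic_on ball 0 \<rho>" and holG: "G holomorphic_on ball 0 \<rho>" and r1: "1 < \<rho>"
  shows "((\<lambda>t. F (cis t) * cnj (G (cis t))) has_integral
          2 * pi * ip (taylor_coeff F) (taylor_coeff G)) {0..2*pi}"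
proof -
  define g where "g = taylor_coeff G"
  define f where "f = taylor_coeff F"
  have sg: "summable (\<lambda>n. norm (g n))" unfolding g_def by (rule tc_abs_summable[OF holG r1])
  obtain K where K: "K \<ge> 0" "\<And>t. norm (F (cis t)) \<le> K" using bounded_on_circle[OF holF r1] by blast
  define h where "h = (\<lambda>n t. F (cis t) * cnj (g n) * cis (- of_int (int n) * t))"
  have Ih: "(h n has_integral (2 * pi * (cnj (g n) * f n))) {0..2*pi}" for n
  proof -
    have "((\<lambda>t. F (cis t) * cis (- of_int (int n) * t)) has_integral 2 * pi * f n) {0..2*pi}"
      using fourier_holo[OF holF r1, of "int n"] by (simp add: f_def)
    from has_integral_mult_right[OF this, of "cnj (g n)"]
    have X: "((\<lambda>t. cnj (g n) * (F (cis t) * cis (- of_int (int n) * t))) has_integral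
       cnj (g n) * (2 * pi * f n)) {0..2*pi}" .
    have E1: "h n = (\<lambda>t. cnj (g n) * (F (cis t) * cis (- of_int (int n) * t)))"
      unfolding h_def by (rule ext) (simp only: mult.commute mult.left_commute)
    have E2: "cnj (g n) * (2 * pi * f n) = 2 * pi * (cnj (g n) * f n)"
      by (simp only: mult.assoc mult.commute mult.left_commute)
    show ?thesis unfolding E1 E2[symmetric] by (rule X)
  qed
  have IN: "((\<lambda>t. \<Sum>n<N. h n t) has_integral (\<Sum>n<N. 2 * pi * (cnj (g n) * f n))) {0..2*pi}" for N
    by (intro has_integral_sum Ih) auto
  have contF: "continuous_on UNIV (\<lambda>t. F (cis t))"
  proof -
    have "continuous_on (ball 0 \<rho>) F" using holF holomorphic_on_imp_continuous_on by blast
    moreover have "cis t \<in> ball 0 \<rho>" for t using r1 by auto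
    moreover have "continuous_on UNIV cis" by (rule continuous_on_cis[OF continuous_on_id])
    ultimately show ?thesis
      by (intro continuous_on_compose2[of "ball 0 \<rho>" F UNIV cis]) auto
  qed
  have cN: "continuous_on {0..2*pi} (\<lambda>t. \<Sum>n<N. h n t)" for N
  proof -
    have c1: "continuous_on {0..2*pi} (\<lambda>t. F (cis t))" by (rule continuous_on_subset[OF contF]) auto
    show ?thesis unfolding h_def by (intro continuous_on_sum ballI continuous_on_mult c1 continuous_on_const continuous_on_cis continuous_on_mult continuous_on_id)
  qed
  have U: "uniform_limit {0..2*pi} (\<lambda>N t. \<Sum>n<N. h n t) (\<lambda>t. \<Sum>n. h n t) sequentially"
  proof (rule Weierstrass_m_test)
    fix n t
    show "norm (h n t) \<le> K * norm (g n)" unfolding h_def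
      using K(2)[of t] by (simp add: norm_mult mult_right_mono)
  next
    show "summable (\<lambda>n. K * norm (g n))" using sg by (rule summable_mult)
  qed
  have lim_eq: "(\<Sum>n. h n t) = F (cis t) * cnj (G (cis t))" for t
  proof -
    have "(\<lambda>n. g n * cis t ^ n) sums G (cis t)" unfolding g_def
      using r1 by (intro tc_sums[OF holG]) auto
    hence "(\<lambda>n. cnj (g n * cis t ^ n)) sums cnj (G (cis t))" by (simp only: sums_cnj)
    hence "(\<lambda>n. F (cis t) * cnj (g n * cis t ^ n)) sums (F (cis t) * cnj (G (cis t)))"
      by (rule sums_mult)
    moreover have "F (cis t) * cnj (g n * cis t ^ n) = h n t" for n
      unfolding h_def by (simp add: Complex.DeMoivre cis_cnj)
    ultimately show ?thesis by (simp add: sums_iff)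
  qed
  obtain I J where I: "\<And>N. ((\<lambda>t. \<Sum>n<N. h n t) has_integral I N) {0..2*pi}"
    and J: "((\<lambda>t. \<Sum>n. h n t) has_integral J) {0..2*pi}" and IJ: "I \<longlonglongrightarrow> J"
    using uniform_limit_integral[OF U cN] by auto
  have IE: "I N = (\<Sum>n<N. 2 * pi * (cnj (g n) * f n))" for N
    using I[of N] IN[of N] by (rule has_integral_unique)
  have lim: "(\<lambda>N. \<Sum>n<N. 2 * pi * (cnj (g n) * f n)) \<longlonglongrightarrow> 2 * pi * ip f g"
  proof -
    have "l2 f" "l2 g" using holo_H2[OF holF r1] holo_H2[OF holG r1] unfolding H2_iff f_def g_def by auto
    hence "(\<lambda>n. f n * cnj (g n)) sums ip f g" unfolding ip_def
      using ip_summable by (simp add: summable_sums)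
    hence S: "(\<lambda>n. 2 * pi * (f n * cnj (g n))) sums (2 * pi * ip f g)" by (rule sums_mult)
    have E: "(\<lambda>n. 2 * pi * (cnj (g n) * f n)) = (\<lambda>n. 2 * pi * (f n * cnj (g n)))"
      by (rule ext) (simp add: mult.commute)
    show ?thesis using S unfolding sums_def E[symmetric] .
  qed
  have "I = (\<lambda>N. \<Sum>n<N. 2 * pi * (cnj (g n) * f n))" using IE by (rule ext)
  hence IJ': "(\<lambda>N. \<Sum>n<N. 2 * pi * (cnj (g n) * f n)) \<longlonglongrightarrow> J" using IJ by simp
  have "J = 2 * pi * ip f g" by (rule LIMSEQ_unique[OF IJ' lim])
  thus ?thesis using J lim_eq unfolding f_def g_def by simp
qed

lemma norm_cnj_phi_identity:
  fixes z a :: complex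
  shows "(norm (1 - cnj z * a))\<^sup>2 - (norm (a - z))\<^sup>2 = (1 - (norm z)\<^sup>2) * (1 - (norm a)\<^sup>2)"
proof -
  have "complex_of_real ((norm (1 - cnj z * a))\<^sup>2 - (norm (a - z))\<^sup>2)
      = (1 - cnj z * a) * cnj (1 - cnj z * a) - (a - z) * cnj (a - z)"
    by (simp only: of_real_diff complex_norm_square)
  also have "\<dots> = (1 - z * cnj z) * (1 - a * cnj a)" by (simp add: algebra_simps)
  also have "\<dots> = complex_of_real ((1 - (norm z)\<^sup>2) * (1 - (norm a)\<^sup>2))"
    by (simp only: of_real_mult of_real_diff of_real_1 complex_norm_square)
  finally show ?thesis by (simp only: of_real_eq_iff)
qed

locale bl =
  fixes lam :: complex and zs :: "nat \<Rightarrow> complex" and n :: nat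
  assumes n1: "n \<ge> 1" and lam1: "norm lam = 1" and zs1: "\<forall>k\<in>{1..n}. norm (zs k) < 1"
begin

definition phi :: "nat \<Rightarrow> complex \<Rightarrow> complex" where
  "phi k z = (z - zs k) / (1 - cnj (zs k) * z)"
definition PP :: "nat set \<Rightarrow> complex \<Rightarrow> complex" where
  "PP S z = (\<Prod>k\<in>S. phi k z)"
definition cc :: "nat \<Rightarrow> complex" where
  "cc i = complex_of_real (sqrt (1 - (norm (zs i))\<^sup>2))"
definition R :: "complex \<Rightarrow> complex" where
  "R = blaschke lam zs n"
definition u :: "nat \<Rightarrow> complex \<Rightarrow> complex" where
  "u i = ufun zs i"
definition e :: "nat \<Rightarrow> nat \<Rightarrow> complex \<Rightarrow> complex" where
  "e i m z = u i z * R z ^ m"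
definition mu :: real where "mu = Max ((\<lambda>k. norm (zs k)) ` {1..n})"
definition rho :: real where "rho = 2 / (1 + mu)"

lemma zs_lt: "k \<in> {1..n} \<Longrightarrow> norm (zs k) < 1" using zs1 by auto

lemma mu_le: "k \<in> {1..n} \<Longrightarrow> norm (zs k) \<le> mu"
  unfolding mu_def by (intro Max_ge) auto

lemma mu_props: "mu < 1" "mu \<ge> 0" "\<And>k. k \<in> {1..n} \<Longrightarrow> norm (zs k) \<le> mu"
proof -
  have ne: "(\<lambda>k. norm (zs k)) ` {1..n} \<noteq> {}" using n1 by auto
  show "mu < 1" unfolding mu_def using ne zs1 by (subst Max_less_iff) auto
  show "\<And>k. k \<in> {1..n} \<Longrightarrow> norm (zs k) \<le> mu" by (rule mu_le)
  have "1 \<in> {1..n}" using n1 by auto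
  from order_trans[OF norm_ge_zero mu_le[OF this]] show "mu \<ge> 0" .
qed

lemma rho_gt1: "1 < rho" unfolding rho_def using mu_props by (simp add: field_simps)

lemma den_nz: assumes "k \<in> {1..n}" "z \<in> ball 0 rho" shows "1 - cnj (zs k) * z \<noteq> 0"
proof -
  have "norm (cnj (zs k) * z) \<le> mu * norm z"
    using mu_props(3)[OF assms(1)] by (simp add: norm_mult mult_right_mono)
  also have "\<dots> \<le> mu * rho" using assms(2) mu_props(2) by (intro mult_left_mono) auto
  also have "\<dots> < 1" unfolding rho_def using mu_props(1,2) by (simp add: field_simps)
  finally show ?thesis by auto
qed

lemma den_nz1: assumes "k \<in> {1..n}" "norm z \<le> 1" shows "1 - cnj (zs k) * z \<noteq> 0"
  using den_nz[OF assms(1)] assms(2) rho_gt1 by auto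

lemma hol_phi: "k \<in> {1..n} \<Longrightarrow> phi k holomorphic_on ball 0 rho"
  unfolding phi_def[abs_def] using den_nz by (intro holomorphic_intros) auto

lemma hol_PP: "S \<subseteq> {1..n} \<Longrightarrow> PP S holomorphic_on ball 0 rho"
  unfolding PP_def[abs_def] using hol_phi by (intro holomorphic_intros) auto

lemma hol_kf: "k \<in> {1..n} \<Longrightarrow> kf (zs k) holomorphic_on ball 0 rho"
  unfolding kf_def[abs_def] using den_nz by (intro holomorphic_intros) auto

lemma R_eq: "R z = lam * PP {1..n} z"
  unfolding R_def blaschke_def PP_def phi_def by simp

lemma u_eq: "u i z = cc i * kf (zs i) z * PP {1..<i} z"
  unfolding u_def ufun_def cc_def kf_def PP_def phi_def by simp

lemma hol_R: "R holomorphic_on ball 0 rho"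
proof -
  have "(\<lambda>z. lam * PP {1..n} z) holomorphic_on ball 0 rho" using hol_PP by (intro holomorphic_intros) auto
  moreover have "R = (\<lambda>z. lam * PP {1..n} z)" by (rule ext, rule R_eq)
  ultimately show ?thesis by simp
qed

lemma hol_u: "i \<in> {1..n} \<Longrightarrow> u i holomorphic_on ball 0 rho"
proof -
  assume i: "i \<in> {1..n}"
  have "{1..<i} \<subseteq> {1..n}" using i by auto
  hence "(\<lambda>z. cc i * kf (zs i) z * PP {1..<i} z) holomorphic_on ball 0 rho"
    using hol_PP hol_kf i by (intro holomorphic_intros) auto
  moreover have "u i = (\<lambda>z. cc i * kf (zs i) z * PP {1..<i} z)" by (rule ext, rule u_eq)
  ultimately show ?thesis by simp
qed

lemma hol_e: "i \<in> {1..n} \<Longrightarrow> e i m holomorphic_on ball 0 rho"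
  unfolding e_def[abs_def] using hol_u hol_R by (intro holomorphic_intros) auto

lemma e_H2: "i \<in> {1..n} \<Longrightarrow> e i m \<in> H2"
  using holo_H2[OF hol_e rho_gt1] .

lemma l2_e: "i \<in> {1..n} \<Longrightarrow> l2 (taylor_coeff (e i m))"
  using e_H2 H2_iff by blast

lemma phi_zero: "phi k (zs k) = 0" unfolding phi_def by simp

lemma cc_sq: "k \<in> {1..n} \<Longrightarrow> cc k * cc k = 1 - (norm (zs k))\<^sup>2"
proof -
  assume k: "k \<in> {1..n}"
  have "0 \<le> 1 - (norm (zs k))\<^sup>2" using zs_lt[OF k]
    by (simp add: abs_square_le_1 less_imp_le)
  thus ?thesis unfolding cc_def by (simp flip: of_real_mult)
qed

lemma cnj_cc: "cnj (cc k) = cc k" unfolding cc_def by simp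

lemma circ_phi_nz: assumes "k \<in> {1..n}" "norm w = 1" shows "phi k w \<noteq> 0"
proof -
  have "w \<noteq> zs k" using zs_lt[OF assms(1)] assms(2) by auto
  thus ?thesis unfolding phi_def using den_nz1[OF assms(1)] assms(2) by auto
qed

lemma circ_cnj_phi: assumes "k \<in> {1..n}" "norm w = 1" shows "cnj (phi k w) = 1 / phi k w"
proof -
  have w0: "w \<noteq> 0" using assms(2) by auto
  have "w * cnj w = 1" using complex_norm_square[of w] assms(2) by simp
  hence cw: "cnj w = 1 / w" using w0 by (simp add: field_simps mult.commute)
  have d1: "1 - cnj (zs k) * w \<noteq> 0" using den_nz1[OF assms(1)] assms(2) by auto
  have d2: "w - zs k \<noteq> 0" using zs_lt[OF assms(1)] assms(2) by auto
  have d3: "w - zs k * w * cnj w \<noteq> 0" using d2 cw w0 by simp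
  show ?thesis unfolding phi_def using d1 d2 w0
    by (simp add: cw field_simps)
qed

lemma circ_cnj_PP: assumes "S \<subseteq> {1..n}" "norm w = 1" shows "cnj (PP S w) = 1 / PP S w"
proof -
  have "cnj (PP S w) = (\<Prod>k\<in>S. 1 / phi k w)" unfolding PP_def cnj_prod
    using assms circ_cnj_phi by (intro prod.cong) auto
  also have "\<dots> = 1 / PP S w" unfolding PP_def by (simp add: prod_dividef)
  finally show ?thesis .
qed

lemma circ_PP_nz: assumes "S \<subseteq> {1..n}" "norm w = 1" shows "PP S w \<noteq> 0"
proof -
  have "finite S" using assms(1) by (rule finite_subset) simp
  thus ?thesis unfolding PP_def using assms circ_phi_nz by (auto simp: prod_zero_iff)
qed

lemma lam_nz: "lam \<noteq> 0" using lam1 by auto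

lemma cnj_lam: "cnj lam = 1 / lam"
proof -
  have "lam * cnj lam = 1" using complex_norm_square[of lam] lam1 by simp
  thus ?thesis using lam_nz by (simp add: field_simps mult.commute)
qed

lemma PP_split: "a \<le> b \<Longrightarrow> b \<le> c \<Longrightarrow> PP {a..<b} z * PP {b..<c} z = PP {a..<c} z"
  unfolding PP_def by (rule prod.atLeastLessThan_concat)

lemma PP_all: "PP {1..n} z = PP {1..<Suc n} z"
  by (simp add: atLeastLessThanSuc_atLeastAtMost)

end

context bl begin

lemma PP_nz_circ_sub: "S \<subseteq> {1..n} \<Longrightarrow> norm w = 1 \<Longrightarrow> PP S w \<noteq> 0" by (rule circ_PP_nz)

lemma PP_zero_at: assumes "j \<in> S" "finite S" shows "PP S (zs j) = 0"
  unfolding PP_def using assms phi_zero by (auto simp: prod_zero_iff)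

lemma ON_good:
  assumes i: "i \<in> {1..n}" and j: "j \<in> {1..n}" and pq: "q \<le> p" and g: "j \<le> i \<or> q < p"
  shows "ip (taylor_coeff (e i p)) (taylor_coeff (e j q)) = (if i = j \<and> p = q then 1 else 0)"
proof -
  define G where "G = (\<lambda>w. if j \<le> i then cc i * cc j * kf (zs i) w * PP {j..<i} w * lam ^ (p - q) * PP {1..n} w ^ (p - q)
      else cc i * cc j * kf (zs i) w * PP {1..<i} w * PP {j..<Suc n} w * lam ^ (p - q) * PP {1..n} w ^ (p - q - 1))"
  have s1: "{j..<i} \<subseteq> {1..n}" "{1..<i} \<subseteq> {1..n}" "{j..<Suc n} \<subseteq> {1..n}" "{1..<j} \<subseteq> {1..n}"
    "{1..n} \<subseteq> {1..n}" "{i..<j} \<subseteq> {1..n}"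
    using i j by auto
  have holG: "G holomorphic_on ball 0 rho"
  proof (cases "j \<le> i")
    case True
    have "(\<lambda>w. cc i * cc j * kf (zs i) w * PP {j..<i} w * lam ^ (p - q) * PP {1..n} w ^ (p - q))
        holomorphic_on ball 0 rho"
      using hol_kf[OF i] hol_PP[OF s1(1)] hol_PP[OF s1(5)] by (intro holomorphic_intros) auto
    thus ?thesis unfolding G_def using True by simp
  next
    case False
    have "(\<lambda>w. cc i * cc j * kf (zs i) w * PP {1..<i} w * PP {j..<Suc n} w * lam ^ (p - q) * PP {1..n} w ^ (p - q - 1))
        holomorphic_on ball 0 rho"
      using hol_kf[OF i] hol_PP[OF s1(2)] hol_PP[OF s1(3)] hol_PP[OF s1(5)] by (intro holomorphic_intros) auto
    thus ?thesis unfolding G_def using False by simp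
  qed
  have pt: "e i p w * cnj (e j q w) = G w * cnj (kf (zs j) w)" if w: "norm w = 1" for w
  proof -
    define A where "A = PP {1..<i} w"
    define B where "B = PP {1..<j} w"
    define P where "P = PP {1..n} w"
    define K where "K = kf (zs i) w"
    define C where "C = cnj (kf (zs j) w)"
    have A0: "A \<noteq> 0" and B0: "B \<noteq> 0" and P0: "P \<noteq> 0"
      unfolding A_def B_def P_def using circ_PP_nz s1 w by auto
    have E1: "e i p w = cc i * K * A * (lam ^ q * lam ^ (p - q)) * (P ^ q * P ^ (p - q))"
      unfolding e_def u_eq R_eq K_def A_def P_def
      by (simp add: power_mult_distrib power_add[symmetric] pq)
    have cnjR: "cnj (R w) = 1 / (lam * P)" unfolding R_eq P_def
      using circ_cnj_PP[OF s1(5) w] cnj_lam by simp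
    have E2: "cnj (e j q w) = cc j * C / (B * lam ^ q * P ^ q)"
      unfolding e_def u_eq C_def B_def complex_cnj_mult complex_cnj_power cnj_cc
      using circ_cnj_PP[OF s1(4) w] cnjR unfolding P_def
      by (simp add: power_divide power_mult_distrib)
    show ?thesis
    proof (cases "j \<le> i")
      case True
      have AB: "A = B * PP {j..<i} w" unfolding A_def B_def
        using PP_split[of 1 j i w] True j by simp
      have "G w = cc i * cc j * K * PP {j..<i} w * lam ^ (p - q) * P ^ (p - q)"
        unfolding G_def K_def P_def using True by simp
      thus ?thesis unfolding E1 E2 AB C_def[symmetric]
        using B0 P0 lam_nz by (simp add: field_simps)
    next
      case False
      hence qp: "q < p" using g by auto
      have BA: "B = A * PP {i..<j} w" unfolding A_def B_def
        using PP_split[of 1 i j w] False i by simp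
      have PB: "P = B * PP {j..<Suc n} w" unfolding P_def B_def PP_all
        using PP_split[of 1 j "Suc n" w] j by simp
      have pp: "P ^ (p - q) = P * P ^ (p - q - 1)" using qp
        by (metis Suc_diff_Suc diff_Suc_1 power_Suc zero_less_diff)
      have "G w = cc i * cc j * K * A * PP {j..<Suc n} w * lam ^ (p - q) * P ^ (p - q - 1)"
        unfolding G_def K_def A_def P_def using False by simp
      moreover have "PP {i..<j} w \<noteq> 0" using circ_PP_nz s1 w by auto
      ultimately show ?thesis unfolding E1 E2 pp C_def[symmetric]
        using A0 B0 P0 lam_nz unfolding BA
        by (subst (2) PB, unfold BA) (simp add: field_simps)
    qed
  qed
  have I1: "((\<lambda>t. e i p (cis t) * cnj (e j q (cis t))) has_integral
      2 * pi * ip (taylor_coeff (e i p)) (taylor_coeff (e j q))) {0..2*pi}"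
    by (rule parseval[OF hol_e[OF i] hol_e[OF j] rho_gt1])
  have I2: "((\<lambda>t. G (cis t) * cnj (kf (zs j) (cis t))) has_integral
      2 * pi * ip (taylor_coeff G) (taylor_coeff (kf (zs j)))) {0..2*pi}"
    by (rule parseval[OF holG hol_kf[OF j] rho_gt1])
  have "(\<lambda>t. e i p (cis t) * cnj (e j q (cis t))) = (\<lambda>t. G (cis t) * cnj (kf (zs j) (cis t)))"
    by (rule ext, rule pt) simp
  with I1 I2 have "2 * pi * ip (taylor_coeff (e i p)) (taylor_coeff (e j q)) =
      2 * pi * ip (taylor_coeff G) (taylor_coeff (kf (zs j)))"
    using has_integral_unique by metis
  hence EQ: "ip (taylor_coeff (e i p)) (taylor_coeff (e j q)) = ip (taylor_coeff G) (taylor_coeff (kf (zs j)))"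
    by simp
  have holG1: "G holomorphic_on ball 0 1"
    using holG rho_gt1 holomorphic_on_subset[of G "ball 0 rho" "ball 0 1"] by auto
  have "ip (taylor_coeff G) (taylor_coeff (kf (zs j))) = G (zs j)"
    by (rule reproducing[OF holG1 zs_lt[OF j]])
  also have "G (zs j) = (if i = j \<and> p = q then 1 else 0)"
  proof (cases "j \<le> i")
    case True
    show ?thesis
    proof (cases "j < i")
      case True
      hence "PP {j..<i} (zs j) = 0" by (intro PP_zero_at) auto
      thus ?thesis unfolding G_def using True by simp
    next
      case False
      with True have ij: "i = j" by simp
      show ?thesis
      proof (cases "p = q")
        case True
        have "1 - cnj (zs j) * zs j \<noteq> 0" using den_nz1[OF j] zs_lt[OF j] by auto
        moreover have "cnj (zs j) * zs j = complex_of_real ((norm (zs j))\<^sup>2)"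
          using complex_norm_square[of "zs j"] by (simp add: mult.commute)
        ultimately show ?thesis unfolding G_def kf_def PP_def using True ij cc_sq[OF j]
          by (simp add: field_simps)
      next
        case False
        hence "p - q > 0" using pq by simp
        moreover have "PP {1..n} (zs j) = 0" using j by (intro PP_zero_at) auto
        ultimately show ?thesis unfolding G_def using ij False by simp
      qed
    qed
  next
    case False
    have "PP {j..<Suc n} (zs j) = 0" using j by (intro PP_zero_at) auto
    thus ?thesis unfolding G_def using False by auto
  qed
  finally show ?thesis using EQ by simp
qed

end

definition orthonormal :: "'j set \<Rightarrow> ('j \<Rightarrow> nat \<Rightarrow> complex) \<Rightarrow> bool" where
  "orthonormal J v \<longleftrightarrow> (\<forall>j\<in>J. l2 (v j)) \<and> (\<forall>j\<in>J. \<forall>l\<in>J. ip (v j) (v l) = (if j = l then 1 else 0))"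

lemma ip_combo:
  assumes "finite J" "finite L" "\<And>j. j \<in> J \<Longrightarrow> l2 (v j)" "\<And>l. l \<in> L \<Longrightarrow> l2 (w l)"
  shows "ip (\<lambda>k. \<Sum>j\<in>J. x j * v j k) (\<lambda>k. \<Sum>l\<in>L. y l * w l k)
       = (\<Sum>j\<in>J. \<Sum>l\<in>L. x j * cnj (y l) * ip (v j) (w l))"
proof -
  have lw: "l2 (\<lambda>k. \<Sum>l\<in>L. y l * w l k)" using assms by (intro l2_sum l2_scale) auto
  have "ip (\<lambda>k. \<Sum>j\<in>J. x j * v j k) (\<lambda>k. \<Sum>l\<in>L. y l * w l k)
      = (\<Sum>j\<in>J. x j * ip (v j) (\<lambda>k. \<Sum>l\<in>L. y l * w l k))"
    by (rule ip_sum1[OF assms(1) assms(3) lw])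
  also have "\<dots> = (\<Sum>j\<in>J. x j * (\<Sum>l\<in>L. cnj (y l) * ip (v j) (w l)))"
    using assms by (intro sum.cong refl arg_cong2[where f="(*)"] ip_sum2) auto
  also have "\<dots> = (\<Sum>j\<in>J. \<Sum>l\<in>L. x j * cnj (y l) * ip (v j) (w l))"
    by (simp add: sum_distrib_left mult.assoc)
  finally show ?thesis .
qed

lemma nn_combo:
  assumes "finite J" "orthonormal J v"
  shows "nn (\<lambda>k. \<Sum>j\<in>J. x j * v j k) = (\<Sum>j\<in>J. (norm (x j))\<^sup>2)"
proof -
  have lv: "\<And>j. j \<in> J \<Longrightarrow> l2 (v j)" using assms(2) unfolding orthonormal_def by auto
  have ls: "l2 (\<lambda>k. \<Sum>j\<in>J. x j * v j k)" using lv assms by (intro l2_sum l2_scale) auto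
  have "complex_of_real (nn (\<lambda>k. \<Sum>j\<in>J. x j * v j k)) = ip (\<lambda>k. \<Sum>j\<in>J. x j * v j k) (\<lambda>k. \<Sum>j\<in>J. x j * v j k)"
    by (rule ip_self[OF ls, symmetric])
  also have "\<dots> = (\<Sum>j\<in>J. \<Sum>l\<in>J. x j * cnj (x l) * ip (v j) (v l))"
    by (rule ip_combo[OF assms(1) assms(1) lv lv])
  also have "\<dots> = (\<Sum>j\<in>J. \<Sum>l\<in>J. if j = l then x j * cnj (x l) else 0)"
    using assms(2) unfolding orthonormal_def by (intro sum.cong refl) auto
  also have "\<dots> = (\<Sum>j\<in>J. x j * cnj (x j))" using assms(1) by simp
  also have "\<dots> = complex_of_real (\<Sum>j\<in>J. (norm (x j))\<^sup>2)"
    by (simp only: of_real_sum complex_norm_square)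
  finally show ?thesis by (simp only: of_real_eq_iff)
qed

lemma bessel_eq:
  assumes fin: "finite J" and on: "orthonormal J v" and ly: "l2 y"
  shows "nn (\<lambda>k. y k - (\<Sum>j\<in>J. ip y (v j) * v j k)) = nn y - (\<Sum>j\<in>J. (norm (ip y (v j)))\<^sup>2)"
proof -
  define c where "c j = ip y (v j)" for j
  define s where "s = (\<lambda>k. \<Sum>j\<in>J. c j * v j k)"
  define S2 where "S2 = (\<Sum>j\<in>J. (norm (c j))\<^sup>2)"
  have lv: "\<And>j. j \<in> J \<Longrightarrow> l2 (v j)" using on unfolding orthonormal_def by auto
  have ls: "l2 s" unfolding s_def using lv fin by (intro l2_sum l2_scale) auto
  have ys: "ip y s = of_real S2"
  proof -
    have "ip y s = (\<Sum>j\<in>J. cnj (c j) * ip y (v j))" unfolding s_def by (rule ip_sum2[OF fin lv ly])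
    also have "\<dots> = (\<Sum>j\<in>J. of_real ((norm (c j))\<^sup>2))"
      unfolding c_def by (intro sum.cong refl) (subst complex_norm_square, simp add: mult.commute)
    finally show ?thesis unfolding S2_def by simp
  qed
  have sy: "ip s y = of_real S2" using ip_cnj[OF ls ly] ys by simp
  have ss: "ip s s = of_real S2" using ip_self[OF ls] nn_combo[OF fin on, of c]
    unfolding s_def S2_def by simp
  have "complex_of_real (nn (\<lambda>k. y k - s k)) = ip (\<lambda>k. y k - s k) (\<lambda>k. y k - s k)"
    by (rule ip_self[OF l2_diff[OF ly ls], symmetric])
  also have "\<dots> = ip y (\<lambda>k. y k - s k) - ip s (\<lambda>k. y k - s k)"
    by (rule ip_diff1[OF ly ls l2_diff[OF ly ls]])
  also have "\<dots> = (ip y y - ip y s) - (ip s y - ip s s)"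
    using ip_diff2[OF ly ls ly] ip_diff2[OF ly ls ls] by simp
  also have "\<dots> = of_real (nn y - S2)" using ys sy ss ip_self[OF ly] by simp
  finally show ?thesis unfolding s_def S2_def c_def by (simp only: of_real_eq_iff)
qed

context bl begin

lemma ON: assumes i: "i \<in> {1..n}" and j: "j \<in> {1..n}"
  shows "ip (taylor_coeff (e i p)) (taylor_coeff (e j q)) = (if i = j \<and> p = q then 1 else 0)"
proof (cases "q \<le> p \<and> (j \<le> i \<or> q < p)")
  case True then show ?thesis using ON_good[OF i j] by auto
next
  case False
  hence "p \<le> q \<and> (i \<le> j \<or> p < q)" by auto
  hence "ip (taylor_coeff (e j q)) (taylor_coeff (e i p)) = (if j = i \<and> q = p then 1 else 0)"
    using ON_good[OF j i] by auto
  moreover have "ip (taylor_coeff (e i p)) (taylor_coeff (e j q)) = cnj (ip (taylor_coeff (e j q)) (taylor_coeff (e i p)))"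
    by (rule ip_cnj[OF l2_e[OF i] l2_e[OF j]])
  ultimately show ?thesis by auto
qed

lemma orthonormal_e: "orthonormal ({1..n} \<times> UNIV) (\<lambda>(i, m). taylor_coeff (e i m))"
  unfolding orthonormal_def using ON l2_e by auto

lemma phi_ident:
  assumes k: "k \<in> {1..n}" and a: "norm a < 1"
  shows "(1 - (norm a)\<^sup>2) * (norm (cc k * kf (zs k) a))\<^sup>2 = 1 - (norm (phi k a))\<^sup>2"
proof -
  define D where "D = (norm (1 - cnj (zs k) * a))\<^sup>2"
  have d0: "1 - cnj (zs k) * a \<noteq> 0" using den_nz1[OF k] a by auto
  hence D0: "D > 0" unfolding D_def by simp
  have ccn: "(norm (cc k))\<^sup>2 = 1 - (norm (zs k))\<^sup>2"
  proof -
    have "0 \<le> 1 - (norm (zs k))\<^sup>2" using zs_lt[OF k] by (simp add: abs_square_le_1 less_imp_le)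
    thus ?thesis unfolding cc_def by simp
  qed
  have X: "(norm (cc k * kf (zs k) a))\<^sup>2 = (1 - (norm (zs k))\<^sup>2) / D"
    unfolding kf_def D_def by (simp add: norm_mult norm_divide power_mult_distrib power_divide ccn)
  have Y: "(norm (phi k a))\<^sup>2 = (norm (a - zs k))\<^sup>2 / D"
    unfolding phi_def D_def by (simp add: norm_divide power_divide)
  have E: "D - (norm (a - zs k))\<^sup>2 = (1 - (norm (zs k))\<^sup>2) * (1 - (norm a)\<^sup>2)"
    unfolding D_def by (rule norm_cnj_phi_identity)
  have "(1 - (norm a)\<^sup>2) * (norm (cc k * kf (zs k) a))\<^sup>2 = ((1 - (norm (zs k))\<^sup>2) * (1 - (norm a)\<^sup>2)) / D"
    unfolding X by simp
  also have "\<dots> = (D - (norm (a - zs k))\<^sup>2) / D" unfolding E ..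
  also have "\<dots> = 1 - (norm (a - zs k))\<^sup>2 / D" using D0 by (simp add: diff_divide_distrib)
  finally show ?thesis unfolding Y .
qed

lemma tele:
  assumes a: "norm a < 1"
  shows "m \<le> n \<Longrightarrow> (1 - (norm a)\<^sup>2) * (\<Sum>i\<in>{1..m}. (norm (u i a))\<^sup>2) = 1 - (norm (PP {1..<Suc m} a))\<^sup>2"
proof (induction m)
  case 0 then show ?case by (simp add: PP_def)
next
  case (Suc m)
  have k: "Suc m \<in> {1..n}" using Suc.prems by auto
  have sp: "PP {1..<Suc (Suc m)} a = PP {1..<Suc m} a * phi (Suc m) a"
    unfolding PP_def by simp
  have "(1 - (norm a)\<^sup>2) * (norm (u (Suc m) a))\<^sup>2
      = (1 - (norm a)\<^sup>2) * (norm (cc (Suc m) * kf (zs (Suc m)) a))\<^sup>2 * (norm (PP {1..<Suc m} a))\<^sup>2"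
    unfolding u_eq by (simp add: norm_mult power_mult_distrib)
  also have "\<dots> = (1 - (norm (phi (Suc m) a))\<^sup>2) * (norm (PP {1..<Suc m} a))\<^sup>2"
    using phi_ident[OF k a] by simp
  finally have X: "(1 - (norm a)\<^sup>2) * (norm (u (Suc m) a))\<^sup>2
      = (norm (PP {1..<Suc m} a))\<^sup>2 - (norm (PP {1..<Suc (Suc m)} a))\<^sup>2"
    unfolding sp by (simp add: norm_mult power_mult_distrib algebra_simps)
  have "(1 - (norm a)\<^sup>2) * (\<Sum>i\<in>{1..Suc m}. (norm (u i a))\<^sup>2)
      = (1 - (norm a)\<^sup>2) * (\<Sum>i\<in>{1..m}. (norm (u i a))\<^sup>2) + (1 - (norm a)\<^sup>2) * (norm (u (Suc m) a))\<^sup>2"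
    by (simp add: distrib_left)
  also have "\<dots> = 1 - (norm (PP {1..<Suc (Suc m)} a))\<^sup>2"
    using Suc.IH Suc.prems X by simp
  finally show ?case .
qed

lemma kernel_id:
  assumes a: "norm a < 1"
  shows "(1 - (norm a)\<^sup>2) * (\<Sum>i\<in>{1..n}. (norm (u i a))\<^sup>2) = 1 - (norm (R a))\<^sup>2"
proof -
  have "norm (R a) = norm (PP {1..<Suc n} a)" unfolding R_eq PP_all by (simp add: norm_mult lam1)
  thus ?thesis using tele[OF a order_refl] by simp
qed

lemma u1_pos: assumes a: "norm a < 1" shows "(norm (u 1 a))\<^sup>2 > 0"
proof -
  have k: "1 \<in> {1..n}" using n1 by auto
  have "(norm (zs 1))\<^sup>2 < 1" using zs_lt[OF k] by (simp add: abs_square_less_1)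
  hence "cc 1 \<noteq> 0" unfolding cc_def by simp
  moreover have "1 - cnj (zs 1) * a \<noteq> 0" using den_nz1[OF k] a by auto
  ultimately show ?thesis unfolding u_eq kf_def PP_def by simp
qed

lemma sum_u_pos: assumes a: "norm a < 1" shows "(\<Sum>i\<in>{1..n}. (norm (u i a))\<^sup>2) > 0"
proof -
  have "(norm (u 1 a))\<^sup>2 \<le> (\<Sum>i\<in>{1..n}. (norm (u i a))\<^sup>2)"
    using n1 by (intro member_le_sum) auto
  thus ?thesis using u1_pos[OF a] by linarith
qed

lemma R_lt1: assumes a: "norm a < 1" shows "norm (R a) < 1"
proof -
  have "(1 - (norm a)\<^sup>2) > 0" using a by (simp add: abs_square_less_1)
  hence "1 - (norm (R a))\<^sup>2 > 0" using kernel_id[OF a] sum_u_pos[OF a] by (metis mult_pos_pos)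
  hence "(norm (R a))\<^sup>2 < 1" by simp
  thus ?thesis by (simp add: abs_square_less_1)
qed

end

lemma orthonormal_subset: "orthonormal J v \<Longrightarrow> K \<subseteq> J \<Longrightarrow> orthonormal K v"
  unfolding orthonormal_def by blast

context bl begin

definition cf :: "(complex \<Rightarrow> complex) \<Rightarrow> nat \<Rightarrow> nat \<Rightarrow> complex" where
  "cf f i m = ip (taylor_coeff f) (taylor_coeff (e i m))"

lemma ball_sub: "ball (0::complex) 1 \<subseteq> ball 0 rho" using rho_gt1 by auto

lemma hol_e1: "i \<in> {1..n} \<Longrightarrow> e i m holomorphic_on ball 0 1"
  using holomorphic_on_subset[OF hol_e ball_sub] by auto

lemma E_expand:
  assumes f: "f \<in> H2" and a: "norm a < 1"
  shows "(\<lambda>M. \<Sum>i\<in>{1..n}. \<Sum>m<M. cf f i m * e i m a) \<longlonglongrightarrow> f a"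
proof -
  define y where "y = taylor_coeff (kf a)"
  define v where "v = (\<lambda>(i, m). taylor_coeff (e i m))"
  define J where "J M = {1..n} \<times> {..<M}" for M :: nat
  define s where "s M = (\<lambda>k. \<Sum>j\<in>J M. ip y (v j) * v j k)" for M
  have ly: "l2 y" and ny: "nn y = 1 / (1 - (norm a)\<^sup>2)" unfolding y_def using l2_kf[OF a] by auto
  have lf: "l2 (taylor_coeff f)" and hf: "f holomorphic_on ball 0 1" using f unfolding H2_iff by auto
  have finJ: "finite (J M)" for M unfolding J_def by auto
  have onJ: "orthonormal (J M) v" for M
    unfolding v_def by (rule orthonormal_subset[OF orthonormal_e]) (auto simp: J_def)
  have lv: "j \<in> J M \<Longrightarrow> l2 (v j)" for j M using onJ[of M] unfolding orthonormal_def by auto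
  have ls: "l2 (s M)" for M unfolding s_def using lv finJ by (intro l2_sum l2_scale) auto
  have c_eq: "ip y (v (i, m)) = cnj (e i m a)" if "i \<in> {1..n}" for i m
  proof -
    have "ip y (v (i, m)) = cnj (ip (v (i, m)) y)" using ip_cnj[OF ly l2_e[OF that]] unfolding v_def by simp
    also have "ip (v (i, m)) y = e i m a" unfolding v_def y_def
      by (simp add: reproducing[OF hol_e1[OF that] a])
    finally show ?thesis .
  qed
  define r where "r = (norm (R a))\<^sup>2"
  have r1: "r < 1" "r \<ge> 0" unfolding r_def using R_lt1[OF a] by (auto simp: abs_square_less_1)
  have sumc: "(\<Sum>j\<in>J M. (norm (ip y (v j)))\<^sup>2) = (\<Sum>i\<in>{1..n}. (norm (u i a))\<^sup>2 * (\<Sum>m<M. r ^ m))" for M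
  proof -
    have "(\<Sum>j\<in>J M. (norm (ip y (v j)))\<^sup>2) = (\<Sum>i\<in>{1..n}. \<Sum>m<M. (norm (ip y (v (i, m))))\<^sup>2)"
      unfolding J_def by (simp add: sum.cartesian_product)
    also have "\<dots> = (\<Sum>i\<in>{1..n}. \<Sum>m<M. (norm (u i a))\<^sup>2 * r ^ m)"
      by (intro sum.cong refl) (simp add: c_eq e_def norm_mult norm_power r_def power_mult_distrib
          power_mult[symmetric] mult.commute[of 2])
    also have "\<dots> = (\<Sum>i\<in>{1..n}. (norm (u i a))\<^sup>2 * (\<Sum>m<M. r ^ m))"
      by (simp add: sum_distrib_left)
    finally show ?thesis .
  qed
  have "(\<lambda>M. \<Sum>i\<in>{1..n}. (norm (u i a))\<^sup>2 * (\<Sum>m<M. r ^ m)) \<longlonglongrightarrow>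
        (\<Sum>i\<in>{1..n}. (norm (u i a))\<^sup>2 * (1 / (1 - r)))"
  proof (intro tendsto_sum tendsto_mult tendsto_const)
    fix i show "(\<lambda>M. \<Sum>m<M. r ^ m) \<longlonglongrightarrow> 1 / (1 - r)"
      using geometric_sums[of r] r1 by (simp add: sums_def)
  qed
  moreover have "(\<Sum>i\<in>{1..n}. (norm (u i a))\<^sup>2 * (1 / (1 - r))) = nn y"
  proof -
    have "1 - (norm a)\<^sup>2 > 0" using a by (simp add: abs_square_less_1)
    moreover have "1 - r > 0" using r1 by simp
    moreover have K: "(1 - (norm a)\<^sup>2) * (\<Sum>i\<in>{1..n}. (norm (u i a))\<^sup>2) = 1 - r"
      unfolding r_def by (rule kernel_id[OF a])
    moreover have S0: "(\<Sum>i\<in>{1..n}. (norm (u i a))\<^sup>2) > 0" by (rule sum_u_pos[OF a])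
    ultimately have "(\<Sum>i\<in>{1..n}. (norm (u i a))\<^sup>2) * (1 / (1 - r)) = 1 / (1 - (norm a)\<^sup>2)"
      by (simp add: K[symmetric] field_simps)
    thus ?thesis unfolding ny sum_distrib_right[symmetric] .
  qed
  ultimately have "(\<lambda>M. \<Sum>j\<in>J M. (norm (ip y (v j)))\<^sup>2) \<longlonglongrightarrow> nn y" unfolding sumc by simp
  hence "(\<lambda>M. nn y - (\<Sum>j\<in>J M. (norm (ip y (v j)))\<^sup>2)) \<longlonglongrightarrow> nn y - nn y"
    by (intro tendsto_diff tendsto_const)
  hence "(\<lambda>M. nn (\<lambda>k. y k - s M k)) \<longlonglongrightarrow> 0"
    unfolding s_def using bessel_eq[OF finJ onJ ly] by simp
  moreover have "nn (\<lambda>k. s M k - y k) = nn (\<lambda>k. y k - s M k)" for M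
    unfolding nn_def by (simp add: norm_minus_commute)
  ultimately have cB: "(\<lambda>M. nn (\<lambda>k. s M k - y k)) \<longlonglongrightarrow> 0" by simp
  have cA: "(\<lambda>M. nn (\<lambda>k. taylor_coeff f k - taylor_coeff f k)) \<longlonglongrightarrow> 0" by (simp add: nn_def)
  have T: "(\<lambda>M. ip (taylor_coeff f) (s M)) \<longlonglongrightarrow> ip (taylor_coeff f) y"
    by (rule ip_tendsto[OF lf ly lf ls cA cB])
  have "ip (taylor_coeff f) y = f a" unfolding y_def by (rule reproducing[OF hf a])
  moreover have "ip (taylor_coeff f) (s M) = (\<Sum>i\<in>{1..n}. \<Sum>m<M. cf f i m * e i m a)" for M
  proof -
    have "ip (taylor_coeff f) (s M) = (\<Sum>j\<in>J M. cnj (ip y (v j)) * ip (taylor_coeff f) (v j))"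
      unfolding s_def by (rule ip_sum2[OF finJ lv lf])
    also have "\<dots> = (\<Sum>i\<in>{1..n}. \<Sum>m<M. cnj (ip y (v (i, m))) * ip (taylor_coeff f) (v (i, m)))"
      unfolding J_def by (simp add: sum.cartesian_product)
    also have "\<dots> = (\<Sum>i\<in>{1..n}. \<Sum>m<M. cf f i m * e i m a)"
    proof (intro sum.cong refl)
      fix i m assume i: "i \<in> {1..n}"
      show "cnj (ip y (v (i, m))) * ip (taylor_coeff f) (v (i, m)) = cf f i m * e i m a"
        unfolding c_eq[OF i] by (simp add: cf_def v_def mult.commute)
    qed
    finally show ?thesis .
  qed
  ultimately show ?thesis using T by simp
qed

end

lemma term_le_nn: assumes "l2 a" shows "(norm (a k))\<^sup>2 \<le> nn a"
proof -
  have "(\<Sum>i\<in>{k}. (norm (a i))\<^sup>2) \<le> (\<Sum>i. (norm (a i))\<^sup>2)"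
    using assms unfolding l2_def by (intro sum_le_suminf) auto
  thus ?thesis unfolding nn_def by simp
qed

lemma psum_le_nn: assumes "l2 a" "finite S" shows "(\<Sum>k\<in>S. (norm (a k))\<^sup>2) \<le> nn a"
  using assms unfolding l2_def nn_def by (intro sum_le_suminf) auto

lemma l2_cauchy_limit:
  assumes lx: "\<And>M. l2 (x M)" and eps: "\<epsilon> \<longlonglongrightarrow> 0"
    and C: "\<And>N M. N \<le> M \<Longrightarrow> nn (\<lambda>k. x M k - x N k) \<le> \<epsilon> N"
  obtains d where "l2 d" "\<And>N. nn (\<lambda>k. d k - x N k) \<le> \<epsilon> N"
proof -
  have pt: "(norm (x M k - x N k))\<^sup>2 \<le> \<epsilon> N" if "N \<le> M" for N M k
    using term_le_nn[OF l2_diff[OF lx[of M] lx[of N]], of k] C[OF that] by linarith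
  have conv: "convergent (\<lambda>M. x M k)" for k
  proof (rule Cauchy_convergent, rule metric_CauchyI)
    fix e :: real assume e: "e > 0"
    have "eventually (\<lambda>N. \<epsilon> N < (e/2)\<^sup>2) sequentially"
      using eps e by (intro order_tendstoD) auto
    then obtain N0 where N0: "\<And>N. N \<ge> N0 \<Longrightarrow> \<epsilon> N < (e/2)\<^sup>2" by (auto simp: eventually_sequentially)
    have b: "norm (x M k - x N0 k) < e/2" if "M \<ge> N0" for M
    proof -
      have "(norm (x M k - x N0 k))\<^sup>2 < (e/2)\<^sup>2" using pt[OF that, of k] N0[of N0] by simp
      thus ?thesis by (rule power_less_imp_less_base) (use e in simp)
    qed
    show "\<exists>M. \<forall>m\<ge>M. \<forall>n\<ge>M. dist (x m k) (x n k) < e"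
    proof (intro exI allI impI)
      fix m n assume "m \<ge> N0" "n \<ge> N0"
      have "dist (x m k) (x n k) \<le> norm (x m k - x N0 k) + norm (x n k - x N0 k)"
        unfolding dist_norm using norm_triangle_ineq4[of "x m k - x N0 k" "x n k - x N0 k"] by simp
      also have "\<dots> < e/2 + e/2" using b \<open>m \<ge> N0\<close> \<open>n \<ge> N0\<close> by (intro add_strict_mono) auto
      finally show "dist (x m k) (x n k) < e" by simp
    qed
  qed
  define d where "d k = lim (\<lambda>M. x M k)" for k
  have dl: "(\<lambda>M. x M k) \<longlonglongrightarrow> d k" for k unfolding d_def using conv convergent_LIMSEQ_iff by blast
  have fin: "(\<Sum>k<K. (norm (d k - x N k))\<^sup>2) \<le> \<epsilon> N" for N K
  proof -
    have "(\<lambda>M. \<Sum>k<K. (norm (x M k - x N k))\<^sup>2) \<longlonglongrightarrow> (\<Sum>k<K. (norm (d k - x N k))\<^sup>2)"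
      by (intro tendsto_intros dl)
    moreover have "eventually (\<lambda>M. (\<Sum>k<K. (norm (x M k - x N k))\<^sup>2) \<le> \<epsilon> N) sequentially"
    proof (rule eventually_sequentiallyI[of N])
      fix M assume M: "N \<le> M"
      have "(\<Sum>k<K. (norm (x M k - x N k))\<^sup>2) \<le> nn (\<lambda>k. x M k - x N k)"
        by (rule psum_le_nn[OF l2_diff[OF lx lx]]) simp
      also have "\<dots> \<le> \<epsilon> N" by (rule C[OF M])
      finally show "(\<Sum>k<K. (norm (x M k - x N k))\<^sup>2) \<le> \<epsilon> N" .
    qed
    ultimately show ?thesis by (rule tendsto_upperbound) simp
  qed
  have sm: "summable (\<lambda>k. (norm (d k - x N k))\<^sup>2)" for N
    by (rule summableI_nonneg_bounded[where x="\<epsilon> N"]) (use fin in auto)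
  have nnb: "nn (\<lambda>k. d k - x N k) \<le> \<epsilon> N" for N
    unfolding nn_def by (rule suminf_le_const[OF sm]) (use fin in auto)
  have "l2 (\<lambda>k. (d k - x 0 k) + x 0 k)" using sm[of 0] lx[of 0] unfolding l2_def[symmetric]
    by (rule l2_add)
  hence "l2 d" by simp
  thus ?thesis using that nnb by blast
qed

lemma tc_sum:
  assumes fin: "finite S" and hol: "\<And>s. s \<in> S \<Longrightarrow> F s holomorphic_on ball 0 r" and r: "r > 0"
  shows "taylor_coeff (\<lambda>z. \<Sum>s\<in>S. c s * F s z) k = (\<Sum>s\<in>S. c s * taylor_coeff (F s) k)"
proof (rule tc_unique[OF r])
  fix z :: complex assume z: "z \<in> ball 0 r"
  have "(\<lambda>k. \<Sum>s\<in>S. c s * (taylor_coeff (F s) k * z ^ k)) sums (\<Sum>s\<in>S. c s * F s z)"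
    by (intro sums_sum sums_mult tc_sums[OF hol z])
  thus "(\<lambda>k. (\<Sum>s\<in>S. c s * taylor_coeff (F s) k) * z ^ k) sums (\<Sum>s\<in>S. c s * F s z)"
    by (simp add: sum_distrib_right mult.assoc)
qed

context bl begin

definition Top :: "nat \<Rightarrow> (complex \<Rightarrow> complex) \<Rightarrow> complex \<Rightarrow> complex" where
  "Top i g = (\<lambda>z. u i z * g (R z))"

definition FN :: "nat \<Rightarrow> (complex \<Rightarrow> complex) \<Rightarrow> nat \<Rightarrow> complex \<Rightarrow> complex" where
  "FN i g N = (\<lambda>z. \<Sum>m<N. taylor_coeff g m * e i m z)"

definition eps :: "(complex \<Rightarrow> complex) \<Rightarrow> nat \<Rightarrow> real" where
  "eps g N = nn (taylor_coeff g) - (\<Sum>m<N. (norm (taylor_coeff g m))\<^sup>2)"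

lemma eps_lim: "g \<in> H2 \<Longrightarrow> eps g \<longlonglongrightarrow> 0"
proof -
  assume "g \<in> H2"
  hence "summable (\<lambda>m. (norm (taylor_coeff g m))\<^sup>2)" unfolding H2_iff l2_def by auto
  hence "(\<lambda>N. \<Sum>m<N. (norm (taylor_coeff g m))\<^sup>2) \<longlonglongrightarrow> nn (taylor_coeff g)"
    unfolding nn_def by (rule summable_LIMSEQ)
  hence "(\<lambda>N. nn (taylor_coeff g) - (\<Sum>m<N. (norm (taylor_coeff g m))\<^sup>2)) \<longlonglongrightarrow> nn (taylor_coeff g) - nn (taylor_coeff g)"
    by (intro tendsto_diff tendsto_const)
  thus ?thesis unfolding eps_def by simp
qed

lemma hol_R1: "R holomorphic_on ball 0 1" using holomorphic_on_subset[OF hol_R ball_sub] .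
lemma hol_u1: "i \<in> {1..n} \<Longrightarrow> u i holomorphic_on ball 0 1" using holomorphic_on_subset[OF hol_u ball_sub] .

lemma hol_Top: assumes i: "i \<in> {1..n}" and g: "g holomorphic_on ball 0 1"
  shows "Top i g holomorphic_on ball 0 1"
proof -
  have "(g \<circ> R) holomorphic_on ball 0 1"
    by (rule holomorphic_on_compose_gen[OF hol_R1 g]) (use R_lt1 in auto)
  hence "(\<lambda>z. u i z * (g \<circ> R) z) holomorphic_on ball 0 1"
    using hol_u1[OF i] by (intro holomorphic_intros)
  thus ?thesis unfolding Top_def by (simp add: o_def)
qed

lemma tc_FN: "i \<in> {1..n} \<Longrightarrow> taylor_coeff (FN i g N) k = (\<Sum>m<N. taylor_coeff g m * taylor_coeff (e i m) k)"
  unfolding FN_def by (rule tc_sum) (use hol_e1 in auto)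

lemma on_i: "i \<in> {1..n} \<Longrightarrow> orthonormal S (\<lambda>m. taylor_coeff (e i m))"
  unfolding orthonormal_def using ON l2_e by auto

lemma l2_FN: "i \<in> {1..n} \<Longrightarrow> l2 (taylor_coeff (FN i g N))"
proof -
  assume i: "i \<in> {1..n}"
  have "l2 (\<lambda>k. \<Sum>m<N. taylor_coeff g m * taylor_coeff (e i m) k)"
    using l2_e[OF i] by (intro l2_sum l2_scale) auto
  moreover have "taylor_coeff (FN i g N) = (\<lambda>k. \<Sum>m<N. taylor_coeff g m * taylor_coeff (e i m) k)"
    by (rule ext, rule tc_FN[OF i])
  ultimately show ?thesis by simp
qed

lemma FN_cauchy:
  assumes i: "i \<in> {1..n}" and g: "g \<in> H2" and NM: "N \<le> M"
  shows "nn (\<lambda>k. taylor_coeff (FN i g M) k - taylor_coeff (FN i g N) k) \<le> eps g N"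
proof -
  have split: "(\<Sum>m<M. f m) = (\<Sum>m<N. f m) + (\<Sum>m\<in>{N..<M}. f m)" for f :: "nat \<Rightarrow> 'a::comm_monoid_add"
    using NM by (metis atLeast0LessThan sum.atLeastLessThan_concat zero_le)
  have "(\<lambda>k. taylor_coeff (FN i g M) k - taylor_coeff (FN i g N) k)
      = (\<lambda>k. \<Sum>m\<in>{N..<M}. taylor_coeff g m * taylor_coeff (e i m) k)"
    unfolding tc_FN[OF i] by (rule ext) (simp add: split)
  hence "nn (\<lambda>k. taylor_coeff (FN i g M) k - taylor_coeff (FN i g N) k) = (\<Sum>m\<in>{N..<M}. (norm (taylor_coeff g m))\<^sup>2)"
    using nn_combo[OF _ on_i[OF i]] by simp
  also have "\<dots> = (\<Sum>m<M. (norm (taylor_coeff g m))\<^sup>2) - (\<Sum>m<N. (norm (taylor_coeff g m))\<^sup>2)"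
    by (simp add: split)
  also have "\<dots> \<le> eps g N" unfolding eps_def
    using psum_le_nn[of "taylor_coeff g" "{..<M}"] g unfolding H2_iff by auto
  finally show ?thesis .
qed

lemma T_main:
  assumes i: "i \<in> {1..n}" and g: "g \<in> H2"
  shows "Top i g \<in> H2" and "\<And>N. nn (\<lambda>k. taylor_coeff (FN i g N) k - taylor_coeff (Top i g) k) \<le> eps g N"
proof -
  have hg: "g holomorphic_on ball 0 1" using g unfolding H2_iff by auto
  obtain d where ld: "l2 d" and dN: "\<And>N. nn (\<lambda>k. d k - taylor_coeff (FN i g N) k) \<le> eps g N"
    using l2_cauchy_limit[of "\<lambda>N. taylor_coeff (FN i g N)" "eps g", OF l2_FN[OF i] eps_lim[OF g] FN_cauchy[OF i g]]
    by blast
  have hFN: "FN i g N holomorphic_on ball 0 1" for N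
    unfolding FN_def using hol_e1[OF i] by (intro holomorphic_intros) auto
  have val: "(\<lambda>k. d k * z ^ k) sums Top i g z" if z: "z \<in> ball 0 1" for z
  proof -
    have nz: "norm z < 1" using z by simp
    define y where "y = taylor_coeff (kf z)"
    have ly: "l2 y" unfolding y_def using l2_kf[OF nz] by auto
    have t1: "(\<lambda>N. ip (taylor_coeff (FN i g N)) y) \<longlonglongrightarrow> ip d y"
    proof (rule ip_tendsto[OF ld ly l2_FN[OF i] ly])
      have "nn (\<lambda>k. taylor_coeff (FN i g N) k - d k) = nn (\<lambda>k. d k - taylor_coeff (FN i g N) k)" for N
        unfolding nn_def by (simp add: norm_minus_commute)
      hence le: "nn (\<lambda>k. taylor_coeff (FN i g N) k - d k) \<le> eps g N" for N using dN by simp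
      have ge: "0 \<le> nn (\<lambda>k. taylor_coeff (FN i g N) k - d k)" for N
        by (rule nn_nonneg[OF l2_diff[OF l2_FN[OF i] ld]])
      show "(\<lambda>N. nn (\<lambda>k. taylor_coeff (FN i g N) k - d k)) \<longlonglongrightarrow> 0"
        by (rule tendsto_sandwich[OF _ _ tendsto_const eps_lim[OF g]]) (use le ge in auto)
      show "(\<lambda>N. nn (\<lambda>k. y k - y k)) \<longlonglongrightarrow> 0" by (simp add: nn_def)
    qed
    have e1: "ip (taylor_coeff (FN i g N)) y = FN i g N z" for N
      unfolding y_def by (rule reproducing[OF hFN nz])
    have "(\<lambda>m. taylor_coeff g m * R z ^ m) sums g (R z)"
      by (rule tc_sums[OF hg]) (use R_lt1[OF nz] in simp)
    hence "(\<lambda>m. u i z * (taylor_coeff g m * R z ^ m)) sums (u i z * g (R z))" by (rule sums_mult)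
    hence t2: "(\<lambda>N. FN i g N z) \<longlonglongrightarrow> Top i g z"
      unfolding FN_def Top_def e_def sums_def by (simp add: sum_distrib_left mult_ac)
    have t1': "(\<lambda>N. FN i g N z) \<longlonglongrightarrow> ip d y" using t1 unfolding e1 .
    have "Top i g z = ip d y" by (rule LIMSEQ_unique[OF t2 t1'])
    moreover have "(\<lambda>k. d k * cnj (y k)) sums ip d y" unfolding ip_def
      using ip_summable[OF ld ly] by (simp add: summable_sums)
    ultimately show ?thesis unfolding y_def tc_kf[OF nz] by simp
  qed
  have tcT: "taylor_coeff (Top i g) k = d k" for k by (rule tc_unique[of 1]) (use val in auto)
  hence "taylor_coeff (Top i g) = d" by (rule ext)
  thus "Top i g \<in> H2" using hol_Top[OF i hg] ld unfolding H2_iff by simp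
  fix N
  have "nn (\<lambda>k. taylor_coeff (FN i g N) k - d k) = nn (\<lambda>k. d k - taylor_coeff (FN i g N) k)"
    unfolding nn_def by (simp add: norm_minus_commute)
  thus "nn (\<lambda>k. taylor_coeff (FN i g N) k - taylor_coeff (Top i g) k) \<le> eps g N"
    using dN[of N] \<open>taylor_coeff (Top i g) = d\<close> by simp
qed

lemma T_conv:
  assumes i: "i \<in> {1..n}" and g: "g \<in> H2"
  shows "(\<lambda>N. nn (\<lambda>k. taylor_coeff (FN i g N) k - taylor_coeff (Top i g) k)) \<longlonglongrightarrow> 0"
proof (rule tendsto_sandwich[OF _ _ tendsto_const eps_lim[OF g]])
  have lT: "l2 (taylor_coeff (Top i g))" using T_main(1)[OF i g] unfolding H2_iff by auto
  show "eventually (\<lambda>N. 0 \<le> nn (\<lambda>k. taylor_coeff (FN i g N) k - taylor_coeff (Top i g) k)) sequentially"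
    by (intro always_eventually allI nn_nonneg l2_diff l2_FN[OF i] lT)
  show "eventually (\<lambda>N. nn (\<lambda>k. taylor_coeff (FN i g N) k - taylor_coeff (Top i g) k) \<le> eps g N) sequentially"
    by (intro always_eventually allI T_main(2)[OF i g])
qed

end

context bl begin

lemma tcFN_fun: "i \<in> {1..n} \<Longrightarrow> taylor_coeff (FN i g N) = (\<lambda>k. \<Sum>m<N. taylor_coeff g m * taylor_coeff (e i m) k)"
  by (rule ext, rule tc_FN)

lemma T_inner:
  assumes i: "i \<in> {1..n}" and j: "j \<in> {1..n}" and g: "g \<in> H2" and h: "h \<in> H2"
  shows "ip (taylor_coeff (Top i g)) (taylor_coeff (Top j h)) = (if i = j then ip (taylor_coeff g) (taylor_coeff h) else 0)"
proof -
  have lTg: "l2 (taylor_coeff (Top i g))" using T_main(1)[OF i g] unfolding H2_iff by auto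
  have lTh: "l2 (taylor_coeff (Top j h))" using T_main(1)[OF j h] unfolding H2_iff by auto
  have L1: "(\<lambda>N. ip (taylor_coeff (FN i g N)) (taylor_coeff (FN j h N))) \<longlonglongrightarrow> ip (taylor_coeff (Top i g)) (taylor_coeff (Top j h))"
    by (rule ip_tendsto[OF lTg lTh l2_FN[OF i] l2_FN[OF j] T_conv[OF i g] T_conv[OF j h]])
  have E: "ip (taylor_coeff (FN i g N)) (taylor_coeff (FN j h N)) =
      (if i = j then (\<Sum>m<N. taylor_coeff g m * cnj (taylor_coeff h m)) else 0)" for N
  proof -
    have "ip (taylor_coeff (FN i g N)) (taylor_coeff (FN j h N)) =
      (\<Sum>m<N. \<Sum>l<N. taylor_coeff g m * cnj (taylor_coeff h l) * ip (taylor_coeff (e i m)) (taylor_coeff (e j l)))"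
      unfolding tcFN_fun[OF i] tcFN_fun[OF j] by (rule ip_combo) (use l2_e i j in auto)
    also have "\<dots> = (\<Sum>m<N. \<Sum>l<N. if i = j \<and> m = l then taylor_coeff g m * cnj (taylor_coeff h l) else 0)"
      using ON[OF i j] by (intro sum.cong refl) auto
    also have "\<dots> = (if i = j then (\<Sum>m<N. taylor_coeff g m * cnj (taylor_coeff h m)) else 0)"
      by (cases "i = j") auto
    finally show ?thesis .
  qed
  have L2: "(\<lambda>N. ip (taylor_coeff (FN i g N)) (taylor_coeff (FN j h N))) \<longlonglongrightarrow>
      (if i = j then ip (taylor_coeff g) (taylor_coeff h) else 0)"
  proof (cases "i = j")
    case True
    have "l2 (taylor_coeff g)" "l2 (taylor_coeff h)" using g h unfolding H2_iff by auto
    hence "(\<lambda>m. taylor_coeff g m * cnj (taylor_coeff h m)) sums ip (taylor_coeff g) (taylor_coeff h)"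
      unfolding ip_def using ip_summable by (simp add: summable_sums)
    thus ?thesis unfolding E using True by (simp add: sums_def)
  next
    case False thus ?thesis unfolding E by simp
  qed
  show ?thesis by (rule LIMSEQ_unique[OF L1 L2])
qed

lemma bessel_ineq:
  assumes i: "i \<in> {1..n}" and f: "f \<in> H2"
  shows "l2 (cf f i)"
proof -
  have lf: "l2 (taylor_coeff f)" using f unfolding H2_iff by auto
  have b: "(\<Sum>m<M. (norm (cf f i m))\<^sup>2) \<le> nn (taylor_coeff f)" for M
  proof -
    have on: "orthonormal {..<M} (\<lambda>m. taylor_coeff (e i m))" by (rule on_i[OF i])
    have "0 \<le> nn (\<lambda>k. taylor_coeff f k - (\<Sum>m<M. ip (taylor_coeff f) (taylor_coeff (e i m)) * taylor_coeff (e i m) k))"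
      using l2_e[OF i] lf by (intro nn_nonneg l2_diff l2_sum l2_scale) auto
    also have "\<dots> = nn (taylor_coeff f) - (\<Sum>m<M. (norm (ip (taylor_coeff f) (taylor_coeff (e i m))))\<^sup>2)"
      by (rule bessel_eq[OF _ on lf]) simp
    finally show ?thesis unfolding cf_def by simp
  qed
  show ?thesis unfolding l2_def
    by (rule summableI_nonneg_bounded[where x="nn (taylor_coeff f)"]) (use b in auto)
qed

lemma T_adj:
  assumes i: "i \<in> {1..n}" and g: "g \<in> H2" and f: "f \<in> H2"
  shows "ip (taylor_coeff (Top i g)) (taylor_coeff f) = ip (taylor_coeff g) (cf f i)"
proof -
  have lTg: "l2 (taylor_coeff (Top i g))" using T_main(1)[OF i g] unfolding H2_iff by auto
  have lf: "l2 (taylor_coeff f)" using f unfolding H2_iff by auto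
  have lg: "l2 (taylor_coeff g)" using g unfolding H2_iff by auto
  have lc: "l2 (cf f i)" by (rule bessel_ineq[OF i f])
  have L1: "(\<lambda>N. ip (taylor_coeff (FN i g N)) (taylor_coeff f)) \<longlonglongrightarrow> ip (taylor_coeff (Top i g)) (taylor_coeff f)"
    by (rule ip_tendsto[OF lTg lf l2_FN[OF i] lf T_conv[OF i g]]) (simp add: nn_def)
  have E: "ip (taylor_coeff (FN i g N)) (taylor_coeff f) = (\<Sum>m<N. taylor_coeff g m * cnj (cf f i m))" for N
  proof -
    have "ip (taylor_coeff (FN i g N)) (taylor_coeff f) = (\<Sum>m<N. taylor_coeff g m * ip (taylor_coeff (e i m)) (taylor_coeff f))"
      unfolding tcFN_fun[OF i] by (rule ip_sum1) (use l2_e[OF i] lf in auto)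
    also have "\<dots> = (\<Sum>m<N. taylor_coeff g m * cnj (cf f i m))"
      unfolding cf_def using ip_cnj[OF l2_e[OF i] lf] by simp
    finally show ?thesis .
  qed
  have "(\<lambda>m. taylor_coeff g m * cnj (cf f i m)) sums ip (taylor_coeff g) (cf f i)"
    unfolding ip_def using ip_summable[OF lg lc] by (simp add: summable_sums)
  hence L2: "(\<lambda>N. ip (taylor_coeff (FN i g N)) (taylor_coeff f)) \<longlonglongrightarrow> ip (taylor_coeff g) (cf f i)"
    unfolding E sums_def .
  show ?thesis by (rule LIMSEQ_unique[OF L1 L2])
qed

end

lemma abs_powser:
  assumes hol: "F holomorphic_on ball 0 1" and z: "norm z < 1"
  shows "summable (\<lambda>k. norm (taylor_coeff F k * z ^ k))"
proof -
  define w where "w = (norm z + 1) / 2"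
  have w: "norm z < w" "w < 1" "0 \<le> w" using z norm_ge_zero[of z] unfolding w_def by auto
  have "(\<lambda>k. taylor_coeff F k * (of_real w) ^ k) sums F (of_real w)"
    by (rule tc_sums[OF hol]) (use w in simp)
  hence "summable (\<lambda>k. taylor_coeff F k * (of_real w) ^ k)" by (simp add: sums_iff)
  thus ?thesis by (rule powser_insidea) (use w norm_ge_zero[of z] in auto)
qed

lemma toeplitz_analytic:
  assumes holU: "U holomorphic_on ball 0 \<rho>" and r1: "1 < \<rho>" and holG: "G holomorphic_on ball 0 1"
    and z: "z \<in> ball 0 1"
  shows "toeplitz U G z = U z * G z"
proof -
  have nz: "norm z < 1" using z by simp
  have "ball (0::complex) 1 \<subseteq> ball 0 \<rho>" using r1 by auto
  hence holU1: "U holomorphic_on ball 0 1" using holomorphic_on_subset[OF holU] by blast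
  have fc: "fourier_coeff U k = (if k \<ge> 0 then taylor_coeff U (nat k) else 0)" for k
  proof -
    have "integral {0..2*pi} (\<lambda>t. U (cis t) * cis (- of_int k * t)) =
        (if k \<ge> 0 then 2 * pi * taylor_coeff U (nat k) else 0)"
      by (rule integral_unique[OF fourier_holo[OF holU r1]])
    thus ?thesis unfolding fourier_coeff_def by auto
  qed
  have inner: "(\<Sum>n. fourier_coeff U (int m - int n) * taylor_coeff G n)
      = (\<Sum>n\<le>m. taylor_coeff G n * taylor_coeff U (m - n))" for m
  proof -
    have "(\<Sum>n. fourier_coeff U (int m - int n) * taylor_coeff G n)
        = (\<Sum>n\<in>{..m}. fourier_coeff U (int m - int n) * taylor_coeff G n)"
      by (rule suminf_finite) (auto simp: fc)
    also have "\<dots> = (\<Sum>n\<le>m. taylor_coeff G n * taylor_coeff U (m - n))"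
      by (intro sum.cong refl) (auto simp: fc nat_diff_distrib)
    finally show ?thesis .
  qed
  have "(\<lambda>k. \<Sum>i\<le>k. (taylor_coeff G i * z ^ i) * (taylor_coeff U (k - i) * z ^ (k - i)))
      sums ((\<Sum>k. taylor_coeff G k * z ^ k) * (\<Sum>k. taylor_coeff U k * z ^ k))"
    by (rule Cauchy_product_sums[OF abs_powser[OF holG nz] abs_powser[OF holU1 nz]])
  moreover have "(\<Sum>k. taylor_coeff G k * z ^ k) = G z" using tc_sums[OF holG z] by (simp add: sums_iff)
  moreover have "(\<Sum>k. taylor_coeff U k * z ^ k) = U z" using tc_sums[OF holU1 z] by (simp add: sums_iff)
  moreover have "(\<Sum>i\<le>k. (taylor_coeff G i * z ^ i) * (taylor_coeff U (k - i) * z ^ (k - i)))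
      = (\<Sum>n. fourier_coeff U (int k - int n) * taylor_coeff G n) * z ^ k" for k
  proof -
    have "(\<Sum>i\<le>k. (taylor_coeff G i * z ^ i) * (taylor_coeff U (k - i) * z ^ (k - i)))
        = (\<Sum>i\<le>k. (taylor_coeff G i * taylor_coeff U (k - i)) * z ^ k)"
    proof (intro sum.cong refl)
      fix i assume "i \<in> {..k}"
      hence "z ^ k = z ^ i * z ^ (k - i)" by (simp add: power_add[symmetric])
      thus "(taylor_coeff G i * z ^ i) * (taylor_coeff U (k - i) * z ^ (k - i))
          = (taylor_coeff G i * taylor_coeff U (k - i)) * z ^ k" by (simp add: mult_ac)
    qed
    also have "\<dots> = (\<Sum>n. fourier_coeff U (int k - int n) * taylor_coeff G n) * z ^ k"
      unfolding inner by (simp add: sum_distrib_right)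
    finally show ?thesis .
  qed
  ultimately have "(\<lambda>k. (\<Sum>n. fourier_coeff U (int k - int n) * taylor_coeff G n) * z ^ k) sums (G z * U z)"
    by simp
  thus ?thesis unfolding toeplitz_def by (simp add: sums_iff mult.commute)
qed

lemma monomial_tc: "taylor_coeff (\<lambda>z. z ^ k) n = (if n = k then 1 else 0)"
proof (rule tc_unique[of 1])
  fix z :: complex assume "z \<in> ball 0 1"
  show "(\<lambda>n. (if n = k then 1 else 0) * z ^ n) sums z ^ k"
  proof -
    have "(\<lambda>n. (if n = k then 1 else 0) * z ^ n) = (\<lambda>n. if n = k then z ^ k else 0)" by auto
    thus ?thesis using sums_single[of k "\<lambda>_. z ^ k"] by simp
  qed
qed simp

lemma monomial_H2: "(\<lambda>z. z ^ k) \<in> H2"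
proof -
  have "summable (\<lambda>n. (norm (taylor_coeff (\<lambda>z. z ^ k) n))\<^sup>2)"
    unfolding monomial_tc by (rule summable_finite[of "{k}"]) auto
  thus ?thesis unfolding H2_def by (auto intro: holomorphic_intros)
qed

lemma inner_monomial: "h2_inner (\<lambda>z. z ^ k) h = cnj (taylor_coeff h k)"
proof -
  have "h2_inner (\<lambda>z. z ^ k) h = (\<Sum>n\<in>{k}. taylor_coeff (\<lambda>z. z ^ k) n * cnj (taylor_coeff h n))"
    unfolding h2_inner_def by (rule suminf_finite) (auto simp: monomial_tc)
  thus ?thesis by (simp add: monomial_tc)
qed

lemma adj_unique:
  assumes h: "h \<in> H2" and h0: "\<forall>z. z \<notin> ball 0 1 \<longrightarrow> h z = 0"
    and ad: "\<forall>f\<in>H2. h2_inner (A f) g = h2_inner f h"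
  shows "h2_adjoint A g = h"
  unfolding h2_adjoint_def
proof (rule the_equality)
  show "h \<in> H2 \<and> (\<forall>z. z \<notin> ball 0 1 \<longrightarrow> h z = 0) \<and> (\<forall>f\<in>H2. h2_inner (A f) g = h2_inner f h)"
    using assms by blast
next
  fix h' assume h': "h' \<in> H2 \<and> (\<forall>z. z \<notin> ball 0 1 \<longrightarrow> h' z = 0) \<and> (\<forall>f\<in>H2. h2_inner (A f) g = h2_inner f h')"
  have tc: "taylor_coeff h' k = taylor_coeff h k" for k
  proof -
    have "h2_inner (\<lambda>z. z ^ k) h' = h2_inner (\<lambda>z. z ^ k) h"
      using h' ad monomial_H2[of k] by auto
    thus ?thesis unfolding inner_monomial by simp
  qed
  show "h' = h"
  proof (rule ext)
    fix z show "h' z = h z"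
    proof (cases "z \<in> ball 0 1")
      case True
      have hh: "h holomorphic_on ball 0 1" "h' holomorphic_on ball 0 1" using h h' unfolding H2_iff by auto
      have "(\<lambda>n. taylor_coeff h n * z ^ n) sums h' z" using tc_sums[OF hh(2) True] unfolding tc .
      moreover have "(\<lambda>n. taylor_coeff h n * z ^ n) sums h z" using tc_sums[OF hh(1) True] .
      ultimately show ?thesis by (rule sums_unique2)
    next
      case False thus ?thesis using h0 h' by auto
    qed
  qed
qed

context bl begin

abbreviation Aop :: "nat \<Rightarrow> (complex \<Rightarrow> complex) \<Rightarrow> complex \<Rightarrow> complex" where
  "Aop i \<equiv> (\<lambda>g. toeplitz (ufun zs i) (comp_op (blaschke lam zs n) g))"

lemma A_eq:
  assumes i: "i \<in> {1..n}" and g: "g holomorphic_on ball 0 1" and z: "z \<in> ball 0 1"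
  shows "Aop i g z = Top i g z"
proof -
  have hc: "comp_op R g holomorphic_on ball 0 1"
  proof -
    have "(g \<circ> R) holomorphic_on ball 0 1"
      by (rule holomorphic_on_compose_gen[OF hol_R1 g]) (use R_lt1 in auto)
    thus ?thesis unfolding comp_op_def by (simp add: o_def)
  qed
  have "toeplitz (u i) (comp_op R g) z = u i z * comp_op R g z"
    by (rule toeplitz_analytic[OF hol_u[OF i] rho_gt1 hc z])
  thus ?thesis unfolding u_def R_def Top_def comp_op_def by simp
qed

lemma tcA: assumes i: "i \<in> {1..n}" and g: "g \<in> H2"
  shows "taylor_coeff (Aop i g) = taylor_coeff (Top i g)"
proof (rule ext, rule tc_cong[of 1])
  fix k z :: complex assume "z \<in> ball 0 1"
  thus "Aop i g z = Top i g z" using A_eq[OF i] g unfolding H2_iff by blast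
qed simp

lemma innerA: assumes i: "i \<in> {1..n}" and g: "g \<in> H2"
  shows "h2_inner (Aop i g) F = ip (taylor_coeff (Top i g)) (taylor_coeff F)"
    "h2_inner F (Aop i g) = ip (taylor_coeff F) (taylor_coeff (Top i g))"
  unfolding h2_inner_ip tcA[OF i g] by simp_all

lemma main1:
  assumes i: "i \<in> {1..n}" and j: "j \<in> {1..n}" and f: "f \<in> H2" and z: "z \<in> ball 0 1"
  shows "h2_adjoint (Aop i) (Aop j f) z = (if i = j then f z else 0)"
proof -
  define hc where "hc = (\<lambda>w. if w \<in> ball 0 1 then (if i = j then f w else 0) else 0)"
  have hf: "f holomorphic_on ball 0 1" and lf: "l2 (taylor_coeff f)" using f unfolding H2_iff by auto
  have hol: "hc holomorphic_on ball 0 1"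
  proof -
    have "(\<lambda>w. if i = j then f w else 0) holomorphic_on ball 0 1"
      using hf by (cases "i = j") auto
    thus ?thesis by (rule holomorphic_transform) (simp add: hc_def)
  qed
  have tch: "taylor_coeff hc = (if i = j then taylor_coeff f else (\<lambda>_. 0))"
  proof (rule ext)
    fix k
    have "taylor_coeff hc k = taylor_coeff (\<lambda>w. if i = j then f w else 0) k"
      by (rule tc_cong[of 1]) (auto simp: hc_def)
    also have "\<dots> = (if i = j then taylor_coeff f k else 0)"
      by (cases "i = j") (simp_all add: taylor_coeff_def)
    finally show "taylor_coeff hc k = (if i = j then taylor_coeff f else (\<lambda>_. 0)) k" by simp
  qed
  have hH: "hc \<in> H2" unfolding H2_iff using hol lf tch by (cases "i = j") (auto simp: l2_zero)
  have "h2_adjoint (Aop i) (Aop j f) = hc"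
  proof (rule adj_unique[OF hH])
    show "\<forall>z. z \<notin> ball 0 1 \<longrightarrow> hc z = 0" by (simp add: hc_def)
    show "\<forall>g\<in>H2. h2_inner (Aop i g) (Aop j f) = h2_inner g hc"
    proof
      fix g assume g: "g \<in> H2"
      have "h2_inner (Aop i g) (Aop j f) = ip (taylor_coeff (Top i g)) (taylor_coeff (Top j f))"
        unfolding h2_inner_ip tcA[OF i g] tcA[OF j f] ..
      also have "\<dots> = (if i = j then ip (taylor_coeff g) (taylor_coeff f) else 0)"
        by (rule T_inner[OF i j g f])
      also have "\<dots> = h2_inner g hc" unfolding h2_inner_ip tch by (simp add: ip_def)
      finally show "h2_inner (Aop i g) (Aop j f) = h2_inner g hc" .
    qed
  qed
  thus ?thesis using z by (simp add: hc_def)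
qed

lemma main2:
  assumes f: "f \<in> H2" and z: "z \<in> ball 0 1"
  shows "(\<Sum>i=1..n. Aop i (h2_adjoint (Aop i) f) z) = f z"
proof -
  define G where "G i = (\<lambda>w. if w \<in> ball 0 1 then (\<Sum>m. cf f i m * w ^ m) else 0)" for i
  have sG: "(\<lambda>m. cf f i m * w ^ m) sums G i w" if i: "i \<in> {1..n}" and w: "w \<in> ball 0 1" for i w
  proof -
    have nw: "norm w < 1" using w by simp
    have "summable (\<lambda>m. cf f i m * cnj (taylor_coeff (kf w) m))"
      by (rule ip_summable[OF bessel_ineq[OF i f] l2_kf(1)[OF nw]])
    hence "summable (\<lambda>m. cf f i m * w ^ m)" by (simp add: tc_kf[OF nw])
    thus ?thesis using w unfolding G_def by (simp add: summable_sums)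
  qed
  have adj: "h2_adjoint (Aop i) f = G i" if i: "i \<in> {1..n}" for i
  proof -
    have hol: "G i holomorphic_on ball 0 1"
      by (rule power_series_holomorphic[where a="cf f i"]) (use sG[OF i] in simp)
    have tcG: "taylor_coeff (G i) = cf f i"
      by (rule ext, rule tc_unique[of 1]) (use sG[OF i] in auto)
    have GH: "G i \<in> H2" unfolding H2_iff tcG using hol bessel_ineq[OF i f] by simp
    show ?thesis
    proof (rule adj_unique[OF GH])
      show "\<forall>z. z \<notin> ball 0 1 \<longrightarrow> G i z = 0" by (simp add: G_def)
      show "\<forall>g\<in>H2. h2_inner (Aop i g) f = h2_inner g (G i)"
      proof
        fix g assume g: "g \<in> H2"
        show "h2_inner (Aop i g) f = h2_inner g (G i)"
          unfolding h2_inner_ip tcA[OF i g] tcG by (rule T_adj[OF i g f])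
      qed
    qed
  qed
  have termA: "Aop i (h2_adjoint (Aop i) f) z = u i z * (\<Sum>m. cf f i m * R z ^ m)" if i: "i \<in> {1..n}" for i
  proof -
    have nz: "norm z < 1" using z by simp
    have hol: "G i holomorphic_on ball 0 1"
      by (rule power_series_holomorphic[where a="cf f i"]) (use sG[OF i] in simp)
    have Rz: "R z \<in> ball 0 1" using R_lt1[OF nz] by simp
    have "Aop i (h2_adjoint (Aop i) f) z = Top i (G i) z" unfolding adj[OF i] by (rule A_eq[OF i hol z])
    also have "\<dots> = u i z * (\<Sum>m. cf f i m * R z ^ m)" unfolding Top_def G_def using Rz by simp
    finally show ?thesis .
  qed
  have L1: "(\<lambda>M. \<Sum>i\<in>{1..n}. \<Sum>m<M. cf f i m * e i m z) \<longlonglongrightarrow> (\<Sum>i\<in>{1..n}. u i z * (\<Sum>m. cf f i m * R z ^ m))"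
  proof (rule tendsto_sum)
    fix i assume i: "i \<in> {1..n}"
    have nz: "norm z < 1" using z by simp
    have "(\<lambda>m. cf f i m * R z ^ m) sums G i (R z)" by (rule sG[OF i]) (use R_lt1[OF nz] in simp)
    hence "(\<lambda>m. u i z * (cf f i m * R z ^ m)) sums (u i z * G i (R z))" by (rule sums_mult)
    moreover have "G i (R z) = (\<Sum>m. cf f i m * R z ^ m)" unfolding G_def using R_lt1[OF nz] by simp
    ultimately show "(\<lambda>M. \<Sum>m<M. cf f i m * e i m z) \<longlonglongrightarrow> u i z * (\<Sum>m. cf f i m * R z ^ m)"
      unfolding sums_def e_def by (simp add: sum_distrib_left mult_ac)
  qed
  have L2: "(\<lambda>M. \<Sum>i\<in>{1..n}. \<Sum>m<M. cf f i m * e i m z) \<longlonglongrightarrow> f z"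
    by (rule E_expand[OF f]) (use z in simp)
  have "(\<Sum>i=1..n. Aop i (h2_adjoint (Aop i) f) z) = (\<Sum>i\<in>{1..n}. u i z * (\<Sum>m. cf f i m * R z ^ m))"
    by (rule sum.cong) (simp_all add: termA)
  also have "\<dots> = f z" by (rule LIMSEQ_unique[OF L1 L2])
  finally show ?thesis .
qed

end

theorem lemma3p2:
  fixes lam :: complex and zs :: "nat \<Rightarrow> complex" and n :: nat
  assumes "n \<ge> 1" and "cmod lam = 1" and "\<forall>k\<in>{1..n}. cmod (zs k) < 1"
  shows "(\<forall>i\<in>{1..n}. \<forall>j\<in>{1..n}. \<forall>f\<in>H2. \<forall>z\<in>ball 0 1.
            h2_adjoint (\<lambda>g. toeplitz (ufun zs i) (comp_op (blaschke lam zs n) g))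
              (toeplitz (ufun zs j) (comp_op (blaschke lam zs n) f)) z
            = (if i = j then f z else 0))
       \<and> (\<forall>f\<in>H2. \<forall>z\<in>ball 0 1.
            (\<Sum>i=1..n. toeplitz (ufun zs i) (comp_op (blaschke lam zs n)
               (h2_adjoint (\<lambda>g. toeplitz (ufun zs i) (comp_op (blaschke lam zs n) g)) f)) z)
            = f z)"
proof -
  interpret bl lam zs n using assms by unfold_locales
  show ?thesis using main1 main2 by blast
qed

end
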